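(* Let $n\ge 2$, $h=1/n$, and for $0\le i\le n$ let $\tau_i=-2\sin\frac{i\pi}{2n}$ and $\sigma_i=2\big(2+\cos\frac{i\pi}{n}\big)$. Let $A,D\in\mathbb{R}^{(n-1)\times(n-1)}$ be the tridiagonal matrices with $A_{k,k}=2$, $A_{k,k\pm1}=-1$ and $D_{k,k}=4$, $D_{k,k\pm1}=1$ (other entries zero), and let $B\in\mathbb{R}^{(n-1)\times n}$ have entries $B_{k,k}=-1$, $B_{k,k+1}=1$ ($1\le k\le n-1$), other entries zero. For $0\le j\le n-1$ let $\bm s_j=\big(\sin\frac{j\pi}{n},\dots,\sin\frac{(n-1)j\pi}{n}\big)^{\mathsf T}\in\mathbb{R}^{n-1}$ (so $\bm s_0=\bm 0$) and $\bm c_j=\nu_j\big(\cos\frac{j\pi}{2n},\cos\frac{3j\pi}{2n},\dots,\cos\frac{(2n-1)j\pi}{2n}\big)^{\mathsf T}\in\mathbb{R}^{n}$, with $\nu_0=\frac1{\sqrt2}$ and $\nu_j=1$ for $j\ge1$. Consider the discrete eigenvalue problem: find $\lambda\in\mathbb{R}$ and $(U,V)\in\mathbb{R}^{n\times(n-1)}\times\mathbb{R}^{(n-1)\times n}$, $(U,V)\neq(0,0)$, with $$UA-B^{\mathsf T}VB^{\mathsf T}=\tfrac{h^2}{6}\lambda\,UD,\qquad -BUB+AV=\tfrac{h^2}{6}\lambda\,DV.$$ Then this problem has the following $2n(n-1)$ eigen-solutions, whose eigenvectors $(U,V)$ form a basis of $\mathbb{R}^{n\times(n-1)}\times\mathbb{R}^{(n-1)\times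 n}$ (a complete eigen-decomposition): (i) $n^2-1$ eigen-solutions satisfying the discrete divergence-free constraint $BUD+DVB^{\mathsf T}=0$: $$\lambda_{i,j}=\frac{6}{h^2}\Big(\frac{\tau_i^2}{\sigma_i}+\frac{\tau_j^2}{\sigma_j}\Big),\quad U_{i,j}=\tau_j\sigma_i\,\bm c_i\bm s_j^{\mathsf T},\quad V_{i,j}=-\tau_i\sigma_j\,\bm s_i\bm c_j^{\mathsf T},$$ for $0\le i,j\le n-1$, $(i,j)\neq(0,0)$; (ii) $(n-1)^2$ (discrete curl-free) eigen-solutions with eigenvalue $0$: $$\lambda=0,\quad U^0_{i,j}=\tau_i\,\bm c_i\bm s_j^{\mathsf T},\quad V^0_{i,j}=\tau_j\,\bm s_i\bm c_j^{\mathsf T},\qquad 1\le i,j\le n-1.$$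
   Context: This is the algebraic form of the lowest-order rectangular Nédélec edge-element discretization of the Maxwell eigenvalue problem $\mathrm{curl}\,\mathrm{rot}\,\bm u=\lambda\bm u$ on $[0,1]^2$ with $\bm u\times\bm n=0$ on the boundary, on a uniform $n\times n$ mesh. For column vectors $\bm a,\bm b$, $\bm a\bm b^{\mathsf T}$ denotes the outer product (written $\bm a\otimes\bm b^{\mathsf T}$ in the paper). *)

theory Defs
  imports Complex_Main "Jordan_Normal_Form.Matrix"
begin

(* All matrices/vectors are 0-indexed: paper index k (1-based) corresponds to k-1 here. *)

definition tau :: "nat \<Rightarrow> nat \<Rightarrow> real" where
  "tau n i = - 2 * sin (real i * pi / (2 * real n))"

definition sigma :: "nat \<Rightarrow> nat \<Rightarrow> real" where
  "sigma n i = 2 * (2 + cos (real i * pi / real n))"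

definition Amat :: "nat \<Rightarrow> real mat" where
  "Amat n = mat (n - 1) (n - 1) (\<lambda>(k, l). if k = l then 2 else if k = l + 1 \<or> l = k + 1 then -1 else 0)"

definition Dmat :: "nat \<Rightarrow> real mat" where
  "Dmat n = mat (n - 1) (n - 1) (\<lambda>(k, l). if k = l then 4 else if k = l + 1 \<or> l = k + 1 then 1 else 0)"

definition Bmat :: "nat \<Rightarrow> real mat" where
  "Bmat n = mat (n - 1) n (\<lambda>(k, l). if l = k then -1 else if l = k + 1 then 1 else 0)"

definition svec :: "nat \<Rightarrow> nat \<Rightarrow> real vec" where
  "svec n j = vec (n - 1) (\<lambda>k. sin (real (k + 1) * real j * pi / real n))"

definition nu :: "nat \<Rightarrow> real" where
  "nu j = (if j = 0 then 1 / sqrt 2 else 1)"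

definition cvec :: "nat \<Rightarrow> nat \<Rightarrow> real vec" where
  "cvec n j = vec n (\<lambda>k. nu j * cos (real (2 * k + 1) * real j * pi / (2 * real n)))"

definition outer :: "real vec \<Rightarrow> real vec \<Rightarrow> real mat" where
  "outer a b = mat (dim_vec a) (dim_vec b) (\<lambda>(r, c). a $ r * b $ c)"

definition is_eigsol :: "nat \<Rightarrow> real \<Rightarrow> real mat \<Rightarrow> real mat \<Rightarrow> bool" where
  "is_eigsol n lam U V \<longleftrightarrow>
     U \<in> carrier_mat n (n - 1) \<and> V \<in> carrier_mat (n - 1) n \<and>
     (U, V) \<noteq> (0\<^sub>m n (n - 1), 0\<^sub>m (n - 1) n) \<and>
     U * Amat n - (Bmat n)\<^sup>T * V * (Bmat n)\<^sup>T
        = ((1 / real n)^2 / 6 * lam) \<cdot>\<^sub>m (U * Dmat n) \<and>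
     - (Bmat n * U * Bmat n) + Amat n * V
        = ((1 / real n)^2 / 6 * lam) \<cdot>\<^sub>m (Dmat n * V)"

definition lam_div :: "nat \<Rightarrow> nat \<Rightarrow> nat \<Rightarrow> real" where
  "lam_div n i j = 6 / (1 / real n)^2 * ((tau n i)^2 / sigma n i + (tau n j)^2 / sigma n j)"

definition U_div :: "nat \<Rightarrow> nat \<Rightarrow> nat \<Rightarrow> real mat" where
  "U_div n i j = (tau n j * sigma n i) \<cdot>\<^sub>m outer (cvec n i) (svec n j)"

definition V_div :: "nat \<Rightarrow> nat \<Rightarrow> nat \<Rightarrow> real mat" where
  "V_div n i j = (- tau n i * sigma n j) \<cdot>\<^sub>m outer (svec n i) (cvec n j)"

definition U_curl :: "nat \<Rightarrow> nat \<Rightarrow> nat \<Rightarrow> real mat" where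
  "U_curl n i j = tau n i \<cdot>\<^sub>m outer (cvec n i) (svec n j)"

definition V_curl :: "nat \<Rightarrow> nat \<Rightarrow> nat \<Rightarrow> real mat" where
  "V_curl n i j = tau n j \<cdot>\<^sub>m outer (svec n i) (cvec n j)"

definition I_div :: "nat \<Rightarrow> (nat \<times> nat) set" where
  "I_div n = {(i, j). i \<le> n - 1 \<and> j \<le> n - 1 \<and> (i, j) \<noteq> (0, 0)}"

definition I_curl :: "nat \<Rightarrow> (nat \<times> nat) set" where
  "I_curl n = {(i, j). 1 \<le> i \<and> i \<le> n - 1 \<and> 1 \<le> j \<and> j \<le> n - 1}"

definition combU :: "nat \<Rightarrow> (nat \<times> nat \<Rightarrow> real) \<Rightarrow> (nat \<times> nat \<Rightarrow> real) \<Rightarrow> real mat" where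
  "combU n a b = mat n (n - 1) (\<lambda>rc.
     (\<Sum>p\<in>I_div n. a p * U_div n (fst p) (snd p) $$ rc)
   + (\<Sum>p\<in>I_curl n. b p * U_curl n (fst p) (snd p) $$ rc))"

definition combV :: "nat \<Rightarrow> (nat \<times> nat \<Rightarrow> real) \<Rightarrow> (nat \<times> nat \<Rightarrow> real) \<Rightarrow> real mat" where
  "combV n a b = mat (n - 1) n (\<lambda>rc.
     (\<Sum>p\<in>I_div n. a p * V_div n (fst p) (snd p) $$ rc)
   + (\<Sum>p\<in>I_curl n. b p * V_curl n (fst p) (snd p) $$ rc))"

end

theory Submission
  imports Defs
begin

lemma cos_int_pi: "cos (real_of_int m * pi) = (if even m then 1 else -1)"
proof (cases "m \<ge> 0")
  case True
  then obtain k where k: "m = int k" using nonneg_int_cases by blast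
  show ?thesis unfolding k using cos_npi[of k] by (simp add: minus_one_power_iff)
next
  case False
  then obtain k where k: "m = - int k" by (metis neg_int_cases not_le less_imp_le)
  have "cos (real_of_int m * pi) = cos (real k * pi)" unfolding k
    by simp
  then show ?thesis unfolding k using cos_npi[of k] by (simp add: minus_one_power_iff)
qed
lemma sin_int_pi: "sin (real_of_int m * pi) = 0"
  by (simp add: sin_times_pi_eq_0)

lemma sin_ne0:
  assumes "n > 0" "\<not> (2 * int n) dvd m"
  shows "sin (real_of_int m * pi / (2 * real n)) \<noteq> 0"
proof
  assume "sin (real_of_int m * pi / (2 * real n)) = 0"
  moreover have "real_of_int m * pi / (2 * real n) = (real_of_int m / real_of_int (2 * int n)) * pi" by simp
  ultimately have "sin ((real_of_int m / real_of_int (2 * int n)) * pi) = 0" by metis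
  hence "real_of_int m / real_of_int (2 * int n) \<in> \<int>" using sin_times_pi_eq_0 by blast
  hence "2 * int n = 0 \<or> 2 * int n dvd m" using of_int_div_of_int_in_Ints_iff by blast
  then show False using assms by auto
qed
lemma sumL2:
  assumes "n > 0" "\<not> (2 * int n) dvd m"
  shows "(\<Sum>k<n. cos (real (2 * k + 1) * real_of_int m * pi / (2 * real n))) = 0"
proof -
  define y where "y = real_of_int m * pi / (2 * real n)"
  have sy: "sin y \<noteq> 0" using sin_ne0[OF assms] y_def by simp
  define f where "f k = sin (2 * real k * y)" for k :: nat
  have "2 * sin y * cos (real (2 * k + 1) * real_of_int m * pi / (2 * real n)) = f (Suc k) - f k" for k
  proof -
    have e: "real (2 * k + 1) * real_of_int m * pi / (2 * real n) = (2 * real k + 1) * y"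
      by (simp add: y_def)
    have "2 * sin y * cos ((2 * real k + 1) * y) = sin ((2 * real k + 1) * y + y) - sin ((2 * real k + 1) * y - y)"
      using cos_times_sin[of "(2 * real k + 1) * y" y] by (simp add: algebra_simps)
    also have "\<dots> = f (Suc k) - f k" unfolding f_def by (simp add: algebra_simps)
    finally show ?thesis using e by simp
  qed
  hence "2 * sin y * (\<Sum>k<n. cos (real (2 * k + 1) * real_of_int m * pi / (2 * real n))) = f n - f 0"
    by (simp add: sum_distrib_left sum_lessThan_telescope)
  also have "f n = 0"
  proof -
    have "2 * real n * y = real_of_int m * pi" using assms(1) by (simp add: y_def)
    then show ?thesis unfolding f_def using sin_int_pi by simp
  qed
  finally show ?thesis using sy by (simp add: f_def)
qed

lemma sumL1:
  assumes "n > 0" "\<not> (2 * int n) dvd m"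
  shows "(\<Sum>k<n. cos (real k * real_of_int m * pi / real n)) = (if odd m then 1 else 0)"
proof -
  define y where "y = real_of_int m * pi / (2 * real n)"
  have sy: "sin y \<noteq> 0" using sin_ne0[OF assms] y_def by simp
  define f where "f k = sin ((2 * real k - 1) * y)" for k :: nat
  have "2 * sin y * cos (real k * real_of_int m * pi / real n) = f (Suc k) - f k" for k
  proof -
    have e: "real k * real_of_int m * pi / real n = (2 * real k) * y"
      using assms(1) by (simp add: y_def)
    have "2 * sin y * cos ((2 * real k) * y) = sin ((2 * real k) * y + y) - sin ((2 * real k) * y - y)"
      using cos_times_sin[of "(2 * real k) * y" y] by (simp add: algebra_simps)
    also have "\<dots> = f (Suc k) - f k" unfolding f_def by (simp add: algebra_simps)
    finally show ?thesis using e by simp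
  qed
  hence "2 * sin y * (\<Sum>k<n. cos (real k * real_of_int m * pi / real n)) = f n - f 0"
    by (simp add: sum_distrib_left sum_lessThan_telescope)
  also have "f n = - cos (real_of_int m * pi) * sin y"
  proof -
    have "(2 * real n - 1) * y = real_of_int m * pi - y" using assms(1) by (simp add: y_def field_simps)
    then show ?thesis unfolding f_def by (simp add: sin_diff sin_int_pi)
  qed
  also have "f 0 = - sin y" by (simp add: f_def)
  finally have "2 * sin y * (\<Sum>k<n. cos (real k * real_of_int m * pi / real n)) = (1 - cos (real_of_int m * pi)) * sin y"
    by (simp add: algebra_simps)
  then show ?thesis using sy by (auto simp: cos_int_pi)
qed

lemma ndvd2n: "m \<noteq> 0 \<Longrightarrow> \<bar>m\<bar> < 2 * int n \<Longrightarrow> \<not> (2 * int n) dvd m"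
proof
  assume "m \<noteq> 0" "\<bar>m\<bar> < 2 * int n" "2 * int n dvd m"
  then have "\<bar>2 * int n\<bar> \<le> \<bar>m\<bar>" using dvd_imp_le_int by blast
  then show False using \<open>\<bar>m\<bar> < 2 * int n\<close> by simp
qed

definition F1 :: "nat \<Rightarrow> int \<Rightarrow> real" where
  "F1 n m = (\<Sum>k<n. cos (real k * real_of_int m * pi / real n))"

definition G2 :: "nat \<Rightarrow> int \<Rightarrow> real" where
  "G2 n m = (\<Sum>k<n. cos (real (2 * k + 1) * real_of_int m * pi / (2 * real n)))"

lemma F1_0: "F1 n 0 = real n" by (simp add: F1_def)
lemma G2_0: "G2 n 0 = real n" by (simp add: G2_def)

lemma F1_val: "n > 0 \<Longrightarrow> m \<noteq> 0 \<Longrightarrow> \<bar>m\<bar> < 2 * int n \<Longrightarrow> F1 n m = (if odd m then 1 else 0)"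
  unfolding F1_def using sumL1 ndvd2n by blast

lemma G2_val: "n > 0 \<Longrightarrow> m \<noteq> 0 \<Longrightarrow> \<bar>m\<bar> < 2 * int n \<Longrightarrow> G2 n m = 0"
  unfolding G2_def using sumL2 ndvd2n by blast

lemma ortho_s:
  assumes n: "n \<ge> 2" and a: "1 \<le> a" "a \<le> n - 1" and b: "1 \<le> b" "b \<le> n - 1"
  shows "(\<Sum>k<n - 1. sin (real (k + 1) * real a * pi / real n) * sin (real (k + 1) * real b * pi / real n))
       = (if a = b then real n / 2 else 0)"
proof -
  define g where "g m k = cos (real k * real_of_int m * pi / real n)" for m :: int and k :: nat
  have shift: "(\<Sum>k<n - 1. g m (Suc k)) = F1 n m - 1" for m
  proof -
    have "F1 n m = (\<Sum>k<Suc (n - 1). g m k)" using n by (simp add: F1_def g_def)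
    also have "\<dots> = g m 0 + (\<Sum>k<n - 1. g m (Suc k))" by (rule sum.lessThan_Suc_shift)
    finally show ?thesis by (simp add: g_def)
  qed
  have "(\<Sum>k<n - 1. sin (real (k + 1) * real a * pi / real n) * sin (real (k + 1) * real b * pi / real n))
      = (\<Sum>k<n - 1. (g (int a - int b) (Suc k) - g (int a + int b) (Suc k)) / 2)"
  proof (rule sum.cong[OF refl])
    fix k
    have e1: "real (k + 1) * real a * pi / real n - real (k + 1) * real b * pi / real n
        = real (Suc k) * real_of_int (int a - int b) * pi / real n" using n by (simp add: field_simps)
    have e2: "real (k + 1) * real a * pi / real n + real (k + 1) * real b * pi / real n
        = real (Suc k) * real_of_int (int a + int b) * pi / real n" using n by (simp add: field_simps)
    show "sin (real (k + 1) * real a * pi / real n) * sin (real (k + 1) * real b * pi / real n)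
        = (g (int a - int b) (Suc k) - g (int a + int b) (Suc k)) / 2"
      unfolding sin_times_sin g_def e1 e2 ..
  qed
  also have "\<dots> = ((F1 n (int a - int b) - 1) - (F1 n (int a + int b) - 1)) / 2"
    unfolding sum_divide_distrib[symmetric] sum_subtractf shift ..
  also have "\<dots> = (if a = b then real n / 2 else 0)"
  proof (cases "a = b")
    case True
    have "F1 n (int a + int b) = 0" using F1_val[of n "int a + int b"] n a b True by auto
    then show ?thesis using True by (simp add: F1_0)
  next
    case False
    have p: "odd (int a - int b) = odd (int a + int b)" by presburger
    have "F1 n (int a - int b) = (if odd (int a - int b) then 1 else 0)" using F1_val[of n "int a - int b"] n a b False by auto
    moreover have "F1 n (int a + int b) = (if odd (int a + int b) then 1 else 0)" using F1_val[of n "int a + int b"] n a b by auto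
    ultimately show ?thesis using False p by simp
  qed
  finally show ?thesis .
qed

lemma nu_sq: "nu i * nu i = (if i = 0 then 1/2 else 1)"
  by (simp add: nu_def)

lemma ortho_c:
  assumes n: "n \<ge> 2" and i: "i < n" and i': "i' < n"
  shows "(\<Sum>k<n. (nu i * cos (real (2 * k + 1) * real i * pi / (2 * real n))) *
                 (nu i' * cos (real (2 * k + 1) * real i' * pi / (2 * real n))))
       = (if i = i' then real n / 2 else 0)"
proof -
  have "(\<Sum>k<n. (nu i * cos (real (2 * k + 1) * real i * pi / (2 * real n))) *
                 (nu i' * cos (real (2 * k + 1) * real i' * pi / (2 * real n))))
      = (\<Sum>k<n. nu i * nu i' * ((cos (real (2 * k + 1) * real_of_int (int i - int i') * pi / (2 * real n))
            + cos (real (2 * k + 1) * real_of_int (int i + int i') * pi / (2 * real n))) / 2))"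
  proof (rule sum.cong[OF refl])
    fix k
    have e1: "real (2 * k + 1) * real i * pi / (2 * real n) - real (2 * k + 1) * real i' * pi / (2 * real n)
        = real (2 * k + 1) * real_of_int (int i - int i') * pi / (2 * real n)" using n by (simp add: field_simps)
    have e2: "real (2 * k + 1) * real i * pi / (2 * real n) + real (2 * k + 1) * real i' * pi / (2 * real n)
        = real (2 * k + 1) * real_of_int (int i + int i') * pi / (2 * real n)" using n by (simp add: field_simps)
    show "(nu i * cos (real (2 * k + 1) * real i * pi / (2 * real n))) *
                 (nu i' * cos (real (2 * k + 1) * real i' * pi / (2 * real n))) =
          nu i * nu i' * ((cos (real (2 * k + 1) * real_of_int (int i - int i') * pi / (2 * real n))
            + cos (real (2 * k + 1) * real_of_int (int i + int i') * pi / (2 * real n))) / 2)"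
      using cos_times_cos[of "real (2 * k + 1) * real i * pi / (2 * real n)" "real (2 * k + 1) * real i' * pi / (2 * real n)"]
      unfolding e1 e2 by simp
  qed
  also have "\<dots> = nu i * nu i' * ((G2 n (int i - int i') + G2 n (int i + int i')) / 2)"
    unfolding G2_def sum_distrib_left[symmetric] sum_divide_distrib[symmetric] sum.distrib ..
  also have "\<dots> = (if i = i' then real n / 2 else 0)"
  proof (cases "i = i'")
    case True
    show ?thesis
    proof (cases "i = 0")
      case True
      then show ?thesis using \<open>i = i'\<close> by (simp add: G2_0 nu_def)
    next
      case False
      have "G2 n (int i + int i') = 0" using G2_val[of n "int i + int i'"] n i i' False True by auto
      then show ?thesis using True False by (simp add: G2_0 nu_def)
    qed
  next
    case False
    have "G2 n (int i - int i') = 0" using G2_val[of n "int i - int i'"] n i i' False by auto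
    moreover have "G2 n (int i + int i') = 0" using G2_val[of n "int i + int i'"] n i i' False by auto
    ultimately show ?thesis using False by simp
  qed
  finally show ?thesis .
qed

lemma ortho_c':
  assumes n: "n \<ge> 2" and k: "k < n" and k': "k' < n"
  shows "(\<Sum>i<n. (nu i * cos (real (2 * k + 1) * real i * pi / (2 * real n))) *
                 (nu i * cos (real (2 * k' + 1) * real i * pi / (2 * real n))))
       = (if k = k' then real n / 2 else 0)"
proof -
  define t where "t i = cos (real (2 * k + 1) * real i * pi / (2 * real n)) * cos (real (2 * k' + 1) * real i * pi / (2 * real n))" for i
  have "(\<Sum>i<n. (nu i * cos (real (2 * k + 1) * real i * pi / (2 * real n))) *
                 (nu i * cos (real (2 * k' + 1) * real i * pi / (2 * real n))))
       = (\<Sum>i<n. t i - (if i = 0 then 1/2 else 0))"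
    by (rule sum.cong[OF refl]) (simp add: t_def nu_def)
  also have "\<dots> = (\<Sum>i<n. t i) - 1/2"
    using n by (simp add: sum_subtractf)
  also have "(\<Sum>i<n. t i) = (F1 n (int k - int k') + F1 n (int k + int k' + 1)) / 2"
  proof -
    have "t i = (cos (real i * real_of_int (int k - int k') * pi / real n) + cos (real i * real_of_int (int k + int k' + 1) * pi / real n)) / 2" for i
    proof -
      have e1: "real (2 * k + 1) * real i * pi / (2 * real n) - real (2 * k' + 1) * real i * pi / (2 * real n)
          = real i * real_of_int (int k - int k') * pi / real n" using n by (simp add: field_simps)
      have e2: "real (2 * k + 1) * real i * pi / (2 * real n) + real (2 * k' + 1) * real i * pi / (2 * real n)
          = real i * real_of_int (int k + int k' + 1) * pi / real n" using n by (simp add: field_simps)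
      show ?thesis unfolding t_def cos_times_cos e1 e2 ..
    qed
    then have "(\<Sum>i<n. t i) = (\<Sum>i<n. (cos (real i * real_of_int (int k - int k') * pi / real n) + cos (real i * real_of_int (int k + int k' + 1) * pi / real n)) / 2)"
      by (intro sum.cong) auto
    also have "\<dots> = (F1 n (int k - int k') + F1 n (int k + int k' + 1)) / 2"
      unfolding F1_def sum_divide_distrib[symmetric] sum.distrib ..
    finally show ?thesis .
  qed
  also have "(F1 n (int k - int k') + F1 n (int k + int k' + 1)) / 2 - 1/2 = (if k = k' then real n / 2 else 0)"
  proof -
    have v2: "F1 n (int k + int k' + 1) = (if odd (int k + int k' + 1) then 1 else 0)"
      using F1_val[of n "int k + int k' + 1"] n k k' by auto
    show ?thesis
    proof (cases "k = k'")
      case True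
      then show ?thesis using v2 by (simp add: F1_0 field_simps)
    next
      case False
      have v1: "F1 n (int k - int k') = (if odd (int k - int k') then 1 else 0)"
        using F1_val[of n "int k - int k'"] n k k' False by auto
      have p: "odd (int k - int k') = even (int k + int k' + 1)" by presburger
      show ?thesis using v1 v2 p False by auto
    qed
  qed
  finally show ?thesis .
qed

lemma sum_if_eq: "finite (A::nat set) \<Longrightarrow> (\<Sum>l\<in>A. (if l = k then (c::real) else 0) * g l) = (if k \<in> A then c * g k else 0)"
proof -
  assume "finite A"
  have "(\<Sum>l\<in>A. (if l = k then c else 0) * g l) = (\<Sum>l\<in>A. if l = k then c * g k else 0)"
    by (intro sum.cong) auto
  also have "\<dots> = (if k \<in> A then c * g k else 0)" using \<open>finite A\<close> by (simp add: sum.delta)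
  finally show ?thesis .
qed

lemma tri_sum:
  assumes k: "k < (N::nat)" and f0: "f 0 = 0" and fN: "f (N + 1) = 0"
  shows "(\<Sum>l<N. (if k = l then (a::real) else if k = l + 1 \<or> l = k + 1 then b else 0) * f (l + 1))
       = a * f (k + 1) + b * f k + b * f (k + 2)"
proof -
  have split: "(if k = l then a else if k = l + 1 \<or> l = k + 1 then b else 0)
      = (if l = k then a else 0) + (if l + 1 = k then b else 0) + (if l = k + 1 then b else 0)" for l
    by simp
  have s1: "(\<Sum>l<N. (if l = k then a else 0) * f (l + 1)) = a * f (k + 1)"
    using k by (subst sum_if_eq) auto
  have s2: "(\<Sum>l<N. (if l + 1 = k then b else 0) * f (l + 1)) = b * f k"
  proof (cases k)
    case 0 then show ?thesis using f0 by simp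
  next
    case (Suc k0)
    have "(\<Sum>l<N. (if l + 1 = k then b else 0) * f (l + 1)) = (\<Sum>l<N. (if l = k0 then b else 0) * f (l + 1))"
      using Suc by (intro sum.cong) auto
    also have "\<dots> = b * f k" using Suc k by (subst sum_if_eq) auto
    finally show ?thesis .
  qed
  have s3: "(\<Sum>l<N. (if l = k + 1 then b else 0) * f (l + 1)) = b * f (k + 2)"
  proof (cases "k + 1 < N")
    case True then show ?thesis by (subst sum_if_eq) auto
  next
    case False then have "N = k + 1" using k by simp
    then show ?thesis using fN by (subst sum_if_eq) auto
  qed
  show ?thesis
    unfolding split distrib_right sum.distrib s1 s2 s3 ..
qed

lemma bi_sum:
  assumes "k + 1 < (n::nat)"
  shows "(\<Sum>l<n. (if l = k then (a::real) else if l = k + 1 then b else 0) * g l) = a * g k + b * g (k + 1)"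
proof -
  have split: "(if l = k then a else if l = k + 1 then b else 0) = (if l = k then a else 0) + (if l = k + 1 then b else 0)" for l
    by auto
  show ?thesis unfolding split distrib_right sum.distrib using assms
    by (subst sum_if_eq, simp, subst sum_if_eq, simp, simp)
qed

lemma biT_sum:
  assumes l: "l \<le> (N::nat)" and f0: "f 0 = 0" and fN: "f (N + 1) = 0"
  shows "(\<Sum>k<N. (if l = k then (a::real) else if l = k + 1 then b else 0) * f (k + 1)) = a * f (l + 1) + b * f l"
proof -
  have split: "(if l = k then a else if l = k + 1 then b else 0) = (if k = l then a else 0) + (if k + 1 = l then b else 0)" for k
    by simp
  have s1: "(\<Sum>k<N. (if k = l then a else 0) * f (k + 1)) = a * f (l + 1)"
    using l fN by (subst sum_if_eq) (auto simp: le_less)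
  have s2: "(\<Sum>k<N. (if k + 1 = l then b else 0) * f (k + 1)) = b * f l"
  proof (cases l)
    case 0 then show ?thesis using f0 by simp
  next
    case (Suc l0)
    have "(\<Sum>k<N. (if k + 1 = l then b else 0) * f (k + 1)) = (\<Sum>k<N. (if k = l0 then b else 0) * f (k + 1))"
      using Suc by (intro sum.cong) auto
    also have "\<dots> = b * f l" using Suc l by (subst sum_if_eq) auto
    finally show ?thesis .
  qed
  show ?thesis unfolding split distrib_right sum.distrib s1 s2 ..
qed

lemma trig_pm: "sin (r * x) + sin ((r + 2) * x) = 2 * sin ((r + 1) * x) * cos (x::real)"
proof -
  have "r * x = (r + 1) * x - x" "(r + 2) * x = (r + 1) * x + x" by (simp_all add: algebra_simps)
  then show ?thesis by (simp add: sin_add sin_diff)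
qed

lemma trigA: "2 * sin ((r + 1) * x) - sin (r * x) - sin ((r + 2) * x) = (2 * sin (x / 2))^2 * sin ((r + 1) * (x::real))"
proof -
  have c: "cos x = 1 - 2 * (sin (x/2))^2" using cos_double_sin[of "x/2"] by simp
  show ?thesis using trig_pm[of r x] c by (simp add: algebra_simps power2_eq_square)
qed

lemma trigD: "4 * sin ((r + 1) * x) + sin (r * x) + sin ((r + 2) * x) = (2 * (2 + cos x)) * sin ((r + 1) * (x::real))"
  using trig_pm[of r x] by (simp add: algebra_simps)

lemma trigB: "cos ((2 * r + 3) * y) - cos ((2 * r + 1) * y) = (-2 * sin y) * sin ((2 * r + 2) * (y::real))"
proof -
  have "(2 * r + 3) * y = (2 * r + 2) * y + y" "(2 * r + 1) * y = (2 * r + 2) * y - y" by (simp_all add: algebra_simps)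
  then show ?thesis by (simp add: cos_add cos_diff)
qed

lemma trigBT: "sin (2 * r * y) - sin ((2 * r + 2) * y) = (-2 * sin y) * cos ((2 * r + 1) * (y::real))"
proof -
  have "2 * r * y = (2 * r + 1) * y - y" "(2 * r + 2) * y = (2 * r + 1) * y + y" by (simp_all add: algebra_simps)
  then show ?thesis by (simp add: sin_add sin_diff)
qed

definition sf :: "nat \<Rightarrow> nat \<Rightarrow> nat \<Rightarrow> real" where
  "sf n j m = sin (real m * real j * pi / real n)"

lemma sf0: "sf n j 0 = 0" by (simp add: sf_def)
lemma sfn: "n > 0 \<Longrightarrow> sf n j n = 0"
proof -
  assume "n > 0"
  then have "real n * real j * pi / real n = real j * pi" by simp
  then show ?thesis unfolding sf_def by (simp add: sin_npi)
qed

lemma svec_dim[simp]: "dim_vec (svec n j) = n - 1" by (simp add: svec_def)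
lemma cvec_dim[simp]: "dim_vec (cvec n j) = n" by (simp add: cvec_def)
lemma svec_idx: "k < n - 1 \<Longrightarrow> svec n j $ k = sf n j (k + 1)" by (simp add: svec_def sf_def)
lemma cvec_idx: "k < n \<Longrightarrow> cvec n j $ k = nu j * cos (real (2 * k + 1) * real j * pi / (2 * real n))"
  by (simp add: cvec_def)

lemma Amat_carrier[simp]: "Amat n \<in> carrier_mat (n - 1) (n - 1)" by (simp add: Amat_def)
lemma Dmat_carrier[simp]: "Dmat n \<in> carrier_mat (n - 1) (n - 1)" by (simp add: Dmat_def)
lemma Bmat_carrier[simp]: "Bmat n \<in> carrier_mat (n - 1) n" by (simp add: Bmat_def)
lemma Amat_dims[simp]: "dim_row (Amat n) = n - 1" "dim_col (Amat n) = n - 1" by (simp_all add: Amat_def)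
lemma Dmat_dims[simp]: "dim_row (Dmat n) = n - 1" "dim_col (Dmat n) = n - 1" by (simp_all add: Dmat_def)
lemma Bmat_dims[simp]: "dim_row (Bmat n) = n - 1" "dim_col (Bmat n) = n" by (simp_all add: Bmat_def)

lemma tau_sq: "(tau n j)^2 = (2 * sin ((real j * pi / real n) / 2))^2"
proof -
  have "real j * pi / (2 * real n) = (real j * pi / real n) / 2" by simp
  then show ?thesis unfolding tau_def by (metis mult_minus_left power2_minus)
qed

lemma nu_tau: "nu j * tau n j = tau n j"
  by (simp add: nu_def tau_def)

lemma sf_x: "sf n j m = sin (real m * (real j * pi / real n))"
proof -
  have "real m * real j * pi / real n = real m * (real j * pi / real n)" by simp
  then show ?thesis unfolding sf_def by metis
qed

lemma A_s:
  assumes n: "n \<ge> 2"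
  shows "Amat n *\<^sub>v svec n j = (tau n j)^2 \<cdot>\<^sub>v svec n j"
proof (rule eq_vecI)
  fix k assume "k < dim_vec ((tau n j)^2 \<cdot>\<^sub>v svec n j)"
  then have k: "k < n - 1" by simp
  have "(Amat n *\<^sub>v svec n j) $ k = (\<Sum>l<n - 1. (if k = l then 2 else if k = l + 1 \<or> l = k + 1 then -1 else 0) * sf n j (l + 1))"
    using k by (simp add: scalar_prod_def Amat_def svec_idx atLeast0LessThan)
  also have "\<dots> = 2 * sf n j (k + 1) + (-1) * sf n j k + (-1) * sf n j (k + 2)"
    by (rule tri_sum) (use k n sfn[of n j] in \<open>simp_all add: sf0\<close>)
  also have "\<dots> = (tau n j)^2 * sf n j (k + 1)"
    using trigA[of "real k" "real j * pi / real n"] unfolding sf_x tau_sq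
    by (simp add: algebra_simps)
  finally show "(Amat n *\<^sub>v svec n j) $ k = ((tau n j)^2 \<cdot>\<^sub>v svec n j) $ k"
    using k by (simp add: svec_idx)
qed simp

lemma D_s:
  assumes n: "n \<ge> 2"
  shows "Dmat n *\<^sub>v svec n j = sigma n j \<cdot>\<^sub>v svec n j"
proof (rule eq_vecI)
  fix k assume "k < dim_vec (sigma n j \<cdot>\<^sub>v svec n j)"
  then have k: "k < n - 1" by simp
  have "(Dmat n *\<^sub>v svec n j) $ k = (\<Sum>l<n - 1. (if k = l then 4 else if k = l + 1 \<or> l = k + 1 then 1 else 0) * sf n j (l + 1))"
    using k by (simp add: scalar_prod_def Dmat_def svec_idx atLeast0LessThan)
  also have "\<dots> = 4 * sf n j (k + 1) + 1 * sf n j k + 1 * sf n j (k + 2)"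
    by (rule tri_sum) (use k n sfn[of n j] in \<open>simp_all add: sf0\<close>)
  also have "\<dots> = sigma n j * sf n j (k + 1)"
    using trigD[of "real k" "real j * pi / real n"] unfolding sf_x sigma_def
    by (simp add: algebra_simps)
  finally show "(Dmat n *\<^sub>v svec n j) $ k = (sigma n j \<cdot>\<^sub>v svec n j) $ k"
    using k by (simp add: svec_idx)
qed simp

lemma B_c:
  assumes n: "n \<ge> 2"
  shows "Bmat n *\<^sub>v cvec n j = tau n j \<cdot>\<^sub>v svec n j"
proof (rule eq_vecI)
  fix k assume "k < dim_vec (tau n j \<cdot>\<^sub>v svec n j)"
  then have k: "k < n - 1" by simp
  define y where "y = real j * pi / (2 * real n)"
  have "(Bmat n *\<^sub>v cvec n j) $ k = (\<Sum>l<n. (if l = k then -1 else if l = k + 1 then 1 else 0) * cvec n j $ l)"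
    using k by (simp add: scalar_prod_def Bmat_def atLeast0LessThan)
  also have "\<dots> = (-1) * cvec n j $ k + 1 * cvec n j $ (k + 1)"
    by (rule bi_sum) (use k in simp)
  also have "\<dots> = nu j * (cos ((2 * real k + 3) * y) - cos ((2 * real k + 1) * y))"
  proof -
    have "real (2 * (k + 1) + 1) * real j * pi / (2 * real n) = (2 * real k + 3) * y"
      by (simp add: y_def algebra_simps)
    moreover have "real (2 * k + 1) * real j * pi / (2 * real n) = (2 * real k + 1) * y"
      by (simp add: y_def algebra_simps)
    ultimately show ?thesis using k by (simp add: cvec_idx algebra_simps)
  qed
  also have "\<dots> = nu j * tau n j * sf n j (k + 1)"
  proof -
    have "(2 * real k + 2) * y = real (k + 1) * real j * pi / real n"
      using n by (simp add: y_def field_simps)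
    then show ?thesis unfolding trigB sf_def tau_def y_def by simp
  qed
  also have "\<dots> = (tau n j \<cdot>\<^sub>v svec n j) $ k"
    using k by (simp add: nu_tau svec_idx)
  finally show "(Bmat n *\<^sub>v cvec n j) $ k = (tau n j \<cdot>\<^sub>v svec n j) $ k" .
qed simp

lemma BT_s:
  assumes n: "n \<ge> 2"
  shows "(Bmat n)\<^sup>T *\<^sub>v svec n j = tau n j \<cdot>\<^sub>v cvec n j"
proof (rule eq_vecI)
  fix l assume "l < dim_vec (tau n j \<cdot>\<^sub>v cvec n j)"
  then have l: "l < n" by simp
  define y where "y = real j * pi / (2 * real n)"
  have "((Bmat n)\<^sup>T *\<^sub>v svec n j) $ l = (\<Sum>k<n - 1. (if l = k then -1 else if l = k + 1 then 1 else 0) * sf n j (k + 1))"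
    using l by (simp add: scalar_prod_def Bmat_def atLeast0LessThan svec_idx)
  also have "\<dots> = (-1) * sf n j (l + 1) + 1 * sf n j l"
    by (rule biT_sum) (use l n sfn[of n j] in \<open>simp_all add: sf0\<close>)
  also have "\<dots> = sin (2 * real l * y) - sin ((2 * real l + 2) * y)"
  proof -
    have "real (l + 1) * real j * pi / real n = (2 * real l + 2) * y"
      using n by (simp add: y_def field_simps)
    moreover have "real l * real j * pi / real n = 2 * real l * y"
      using n by (simp add: y_def field_simps)
    ultimately show ?thesis unfolding sf_def by simp
  qed
  also have "\<dots> = tau n j * cos ((2 * real l + 1) * y)"
    unfolding trigBT tau_def y_def by simp
  also have "\<dots> = (tau n j \<cdot>\<^sub>v cvec n j) $ l"
  proof -
    have "real (2 * l + 1) * real j * pi / (2 * real n) = (2 * real l + 1) * y"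
      by (simp add: y_def algebra_simps)
    then show ?thesis using l nu_tau[of j n] by (simp add: cvec_idx mult.assoc[symmetric])
  qed
  finally show "((Bmat n)\<^sup>T *\<^sub>v svec n j) $ l = (tau n j \<cdot>\<^sub>v cvec n j) $ l" .
qed simp

lemma outer_carrier[simp]: "outer a b \<in> carrier_mat (dim_vec a) (dim_vec b)"
  by (simp add: outer_def)
lemma outer_dims[simp]: "dim_row (outer a b) = dim_vec a" "dim_col (outer a b) = dim_vec b"
  by (simp_all add: outer_def)
lemma outer_idx[simp]: "r < dim_vec a \<Longrightarrow> c < dim_vec b \<Longrightarrow> outer a b $$ (r, c) = a $ r * b $ c"
  by (simp add: outer_def)

lemma outer_mult:
  assumes M: "M \<in> carrier_mat (dim_vec b) k"
  shows "outer a b * M = outer a (M\<^sup>T *\<^sub>v b)"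
proof (rule eq_matI)
  fix r c assume r: "r < dim_row (outer a (M\<^sup>T *\<^sub>v b))" and c: "c < dim_col (outer a (M\<^sup>T *\<^sub>v b))"
  then have r': "r < dim_vec a" and c': "c < k" using M by auto
  have "(outer a b * M) $$ (r, c) = (\<Sum>l\<in>{0..<dim_vec b}. (a $ r * b $ l) * M $$ (l, c))"
    using r' c' M by (simp add: scalar_prod_def)
  also have "\<dots> = a $ r * (\<Sum>l\<in>{0..<dim_vec b}. M $$ (l, c) * b $ l)"
    by (simp add: sum_distrib_left algebra_simps)
  also have "\<dots> = outer a (M\<^sup>T *\<^sub>v b) $$ (r, c)"
    using r' c' M by (simp add: scalar_prod_def)
  finally show "(outer a b * M) $$ (r, c) = outer a (M\<^sup>T *\<^sub>v b) $$ (r, c)" .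
qed (use M in auto)

lemma mult_outer:
  assumes M: "M \<in> carrier_mat k (dim_vec a)"
  shows "M * outer a b = outer (M *\<^sub>v a) b"
proof (rule eq_matI)
  fix r c assume r: "r < dim_row (outer (M *\<^sub>v a) b)" and c: "c < dim_col (outer (M *\<^sub>v a) b)"
  then have r': "r < k" and c': "c < dim_vec b" using M by auto
  have "(M * outer a b) $$ (r, c) = (\<Sum>l\<in>{0..<dim_vec a}. M $$ (r, l) * (a $ l * b $ c))"
    using r' c' M by (simp add: scalar_prod_def)
  also have "\<dots> = (\<Sum>l\<in>{0..<dim_vec a}. M $$ (r, l) * a $ l) * b $ c"
    by (simp add: sum_distrib_right mult.assoc)
  also have "\<dots> = outer (M *\<^sub>v a) b $$ (r, c)"
    using r' c' M by (simp add: scalar_prod_def)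
  finally show "(M * outer a b) $$ (r, c) = outer (M *\<^sub>v a) b $$ (r, c)" .
qed (use M in auto)

lemma outer_smult_l: "outer (x \<cdot>\<^sub>v a) b = x \<cdot>\<^sub>m outer a b"
  by (rule eq_matI) auto
lemma outer_smult_r: "outer a (x \<cdot>\<^sub>v b) = x \<cdot>\<^sub>m outer a b"
  by (rule eq_matI) auto

lemma smult_smult': "x \<cdot>\<^sub>m (y \<cdot>\<^sub>m M) = (x * y) \<cdot>\<^sub>m (M :: real mat)"
  by (rule eq_matI) auto
lemma smult_minus': "x \<cdot>\<^sub>m M - y \<cdot>\<^sub>m M = (x - y) \<cdot>\<^sub>m (M :: real mat)"
  by (rule eq_matI) (auto simp: algebra_simps)
lemma smult_uminus_plus': "- (x \<cdot>\<^sub>m M) + y \<cdot>\<^sub>m M = (y - x) \<cdot>\<^sub>m (M :: real mat)"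
  by (rule eq_matI) (auto simp: algebra_simps)
lemma smult_plus': "x \<cdot>\<^sub>m M + y \<cdot>\<^sub>m M = (x + y) \<cdot>\<^sub>m (M :: real mat)"
  by (rule eq_matI) (auto simp: algebra_simps)
lemma smult_zero': "0 \<cdot>\<^sub>m M = 0\<^sub>m (dim_row M) (dim_col (M :: real mat))"
  by (rule eq_matI) auto

lemma Amat_sym: "(Amat n)\<^sup>T = Amat n"
  by (rule eq_matI) (auto simp: Amat_def)
lemma Dmat_sym: "(Dmat n)\<^sup>T = Dmat n"
  by (rule eq_matI) (auto simp: Dmat_def)

context
  fixes n :: nat and i j :: nat
  assumes n: "n \<ge> 2"
begin

abbreviation "O1 \<equiv> outer (cvec n i) (svec n j)"
abbreviation "O2 \<equiv> outer (svec n i) (cvec n j)"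
abbreviation "O3 \<equiv> outer (svec n i) (svec n j)"

lemma O1c: "O1 \<in> carrier_mat n (n - 1)" using outer_carrier[of "cvec n i" "svec n j"] by simp
lemma O2c: "O2 \<in> carrier_mat (n - 1) n" using outer_carrier[of "svec n i" "cvec n j"] by simp
lemma BTc: "(Bmat n)\<^sup>T \<in> carrier_mat n (n - 1)" unfolding transpose_carrier_mat by (rule Bmat_carrier)

lemma P_UA: "(a \<cdot>\<^sub>m O1) * Amat n = (a * (tau n j)^2) \<cdot>\<^sub>m O1"
proof -
  have "(a \<cdot>\<^sub>m O1) * Amat n = a \<cdot>\<^sub>m (O1 * Amat n)" by (rule mult_smult_assoc_mat[OF O1c Amat_carrier])
  also have "O1 * Amat n = outer (cvec n i) ((Amat n)\<^sup>T *\<^sub>v svec n j)" by (rule outer_mult[where k="n - 1"]) (simp only: svec_dim cvec_dim Amat_carrier Dmat_carrier Bmat_carrier BTc)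
  also have "\<dots> = (tau n j)^2 \<cdot>\<^sub>m O1" by (simp add: Amat_sym A_s[OF n] outer_smult_r)
  finally show ?thesis by (simp add: smult_smult')
qed

lemma P_UD: "(a \<cdot>\<^sub>m O1) * Dmat n = (a * sigma n j) \<cdot>\<^sub>m O1"
proof -
  have "(a \<cdot>\<^sub>m O1) * Dmat n = a \<cdot>\<^sub>m (O1 * Dmat n)" by (rule mult_smult_assoc_mat[OF O1c Dmat_carrier])
  also have "O1 * Dmat n = outer (cvec n i) ((Dmat n)\<^sup>T *\<^sub>v svec n j)" by (rule outer_mult[where k="n - 1"]) (simp only: svec_dim cvec_dim Amat_carrier Dmat_carrier Bmat_carrier BTc)
  also have "\<dots> = sigma n j \<cdot>\<^sub>m O1" by (simp add: Dmat_sym D_s[OF n] outer_smult_r)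
  finally show ?thesis by (simp add: smult_smult')
qed

lemma P_AV: "Amat n * (b \<cdot>\<^sub>m O2) = (b * (tau n i)^2) \<cdot>\<^sub>m O2"
proof -
  have "Amat n * (b \<cdot>\<^sub>m O2) = b \<cdot>\<^sub>m (Amat n * O2)" by (rule mult_smult_distrib[OF Amat_carrier O2c])
  also have "Amat n * O2 = outer (Amat n *\<^sub>v svec n i) (cvec n j)" by (rule mult_outer[where k="n - 1"]) (simp only: svec_dim cvec_dim Amat_carrier Dmat_carrier Bmat_carrier BTc)
  also have "\<dots> = (tau n i)^2 \<cdot>\<^sub>m O2" by (simp add: A_s[OF n] outer_smult_l)
  finally show ?thesis by (simp add: smult_smult')
qed

lemma P_DV: "Dmat n * (b \<cdot>\<^sub>m O2) = (b * sigma n i) \<cdot>\<^sub>m O2"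
proof -
  have "Dmat n * (b \<cdot>\<^sub>m O2) = b \<cdot>\<^sub>m (Dmat n * O2)" by (rule mult_smult_distrib[OF Dmat_carrier O2c])
  also have "Dmat n * O2 = outer (Dmat n *\<^sub>v svec n i) (cvec n j)" by (rule mult_outer[where k="n - 1"]) (simp only: svec_dim cvec_dim Amat_carrier Dmat_carrier Bmat_carrier BTc)
  also have "\<dots> = sigma n i \<cdot>\<^sub>m O2" by (simp add: D_s[OF n] outer_smult_l)
  finally show ?thesis by (simp add: smult_smult')
qed

lemma P_BTVBT: "(Bmat n)\<^sup>T * (b \<cdot>\<^sub>m O2) * (Bmat n)\<^sup>T = (b * tau n i * tau n j) \<cdot>\<^sub>m O1"
proof -
  have "(Bmat n)\<^sup>T * (b \<cdot>\<^sub>m O2) = b \<cdot>\<^sub>m ((Bmat n)\<^sup>T * O2)" by (rule mult_smult_distrib[OF BTc O2c])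
  also have "(Bmat n)\<^sup>T * O2 = outer ((Bmat n)\<^sup>T *\<^sub>v svec n i) (cvec n j)" by (rule mult_outer[where k="n"]) (simp only: svec_dim cvec_dim Amat_carrier Dmat_carrier Bmat_carrier BTc)
  also have "\<dots> = outer (tau n i \<cdot>\<^sub>v cvec n i) (cvec n j)" by (simp add: BT_s[OF n])
  finally have e: "(Bmat n)\<^sup>T * (b \<cdot>\<^sub>m O2) = b \<cdot>\<^sub>m outer (tau n i \<cdot>\<^sub>v cvec n i) (cvec n j)" .
  have c: "outer (tau n i \<cdot>\<^sub>v cvec n i) (cvec n j) \<in> carrier_mat n n"
    using outer_carrier[of "tau n i \<cdot>\<^sub>v cvec n i" "cvec n j"] by simp
  have "(b \<cdot>\<^sub>m outer (tau n i \<cdot>\<^sub>v cvec n i) (cvec n j)) * (Bmat n)\<^sup>T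
      = b \<cdot>\<^sub>m (outer (tau n i \<cdot>\<^sub>v cvec n i) (cvec n j) * (Bmat n)\<^sup>T)"
    by (rule mult_smult_assoc_mat[OF c BTc])
  also have "outer (tau n i \<cdot>\<^sub>v cvec n i) (cvec n j) * (Bmat n)\<^sup>T
      = outer (tau n i \<cdot>\<^sub>v cvec n i) ((Bmat n)\<^sup>T\<^sup>T *\<^sub>v cvec n j)" by (rule outer_mult[where k="n - 1"]) (simp only: svec_dim cvec_dim Amat_carrier Dmat_carrier Bmat_carrier BTc)
  also have "\<dots> = outer (tau n i \<cdot>\<^sub>v cvec n i) (tau n j \<cdot>\<^sub>v svec n j)" by (simp add: B_c[OF n])
  finally show ?thesis using e by (simp add: outer_smult_l outer_smult_r smult_smult' mult_ac)
qed

lemma P_BUB: "Bmat n * (a \<cdot>\<^sub>m O1) * Bmat n = (a * tau n i * tau n j) \<cdot>\<^sub>m O2"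
proof -
  have "Bmat n * (a \<cdot>\<^sub>m O1) = a \<cdot>\<^sub>m (Bmat n * O1)" by (rule mult_smult_distrib[OF Bmat_carrier O1c])
  also have "Bmat n * O1 = outer (Bmat n *\<^sub>v cvec n i) (svec n j)" by (rule mult_outer[where k="n - 1"]) (simp only: svec_dim cvec_dim Amat_carrier Dmat_carrier Bmat_carrier BTc)
  also have "\<dots> = outer (tau n i \<cdot>\<^sub>v svec n i) (svec n j)" by (simp add: B_c[OF n])
  finally have e: "Bmat n * (a \<cdot>\<^sub>m O1) = a \<cdot>\<^sub>m outer (tau n i \<cdot>\<^sub>v svec n i) (svec n j)" .
  have c: "outer (tau n i \<cdot>\<^sub>v svec n i) (svec n j) \<in> carrier_mat (n - 1) (n - 1)"
    using outer_carrier[of "tau n i \<cdot>\<^sub>v svec n i" "svec n j"] by simp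
  have "(a \<cdot>\<^sub>m outer (tau n i \<cdot>\<^sub>v svec n i) (svec n j)) * Bmat n
      = a \<cdot>\<^sub>m (outer (tau n i \<cdot>\<^sub>v svec n i) (svec n j) * Bmat n)"
    by (rule mult_smult_assoc_mat[OF c Bmat_carrier])
  also have "outer (tau n i \<cdot>\<^sub>v svec n i) (svec n j) * Bmat n
      = outer (tau n i \<cdot>\<^sub>v svec n i) ((Bmat n)\<^sup>T *\<^sub>v svec n j)" by (rule outer_mult[where k="n"]) (simp only: svec_dim cvec_dim Amat_carrier Dmat_carrier Bmat_carrier BTc)
  also have "\<dots> = outer (tau n i \<cdot>\<^sub>v svec n i) (tau n j \<cdot>\<^sub>v cvec n j)" by (simp add: BT_s[OF n])
  finally show ?thesis using e by (simp add: outer_smult_l outer_smult_r smult_smult' mult_ac)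
qed

lemma P_BUD: "Bmat n * (a \<cdot>\<^sub>m O1) * Dmat n = (a * tau n i * sigma n j) \<cdot>\<^sub>m O3"
proof -
  have "Bmat n * (a \<cdot>\<^sub>m O1) = a \<cdot>\<^sub>m (Bmat n * O1)" by (rule mult_smult_distrib[OF Bmat_carrier O1c])
  also have "Bmat n * O1 = outer (Bmat n *\<^sub>v cvec n i) (svec n j)" by (rule mult_outer[where k="n - 1"]) (simp only: svec_dim cvec_dim Amat_carrier Dmat_carrier Bmat_carrier BTc)
  also have "\<dots> = outer (tau n i \<cdot>\<^sub>v svec n i) (svec n j)" by (simp add: B_c[OF n])
  finally have e: "Bmat n * (a \<cdot>\<^sub>m O1) = a \<cdot>\<^sub>m outer (tau n i \<cdot>\<^sub>v svec n i) (svec n j)" .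
  have c: "outer (tau n i \<cdot>\<^sub>v svec n i) (svec n j) \<in> carrier_mat (n - 1) (n - 1)"
    using outer_carrier[of "tau n i \<cdot>\<^sub>v svec n i" "svec n j"] by simp
  have "(a \<cdot>\<^sub>m outer (tau n i \<cdot>\<^sub>v svec n i) (svec n j)) * Dmat n
      = a \<cdot>\<^sub>m (outer (tau n i \<cdot>\<^sub>v svec n i) (svec n j) * Dmat n)"
    by (rule mult_smult_assoc_mat[OF c Dmat_carrier])
  also have "outer (tau n i \<cdot>\<^sub>v svec n i) (svec n j) * Dmat n
      = outer (tau n i \<cdot>\<^sub>v svec n i) ((Dmat n)\<^sup>T *\<^sub>v svec n j)" by (rule outer_mult[where k="n - 1"]) (simp only: svec_dim cvec_dim Amat_carrier Dmat_carrier Bmat_carrier BTc)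
  also have "\<dots> = outer (tau n i \<cdot>\<^sub>v svec n i) (sigma n j \<cdot>\<^sub>v svec n j)" by (simp add: Dmat_sym D_s[OF n])
  finally show ?thesis using e by (simp add: outer_smult_l outer_smult_r smult_smult' mult_ac)
qed

lemma P_DVBT: "Dmat n * (b \<cdot>\<^sub>m O2) * (Bmat n)\<^sup>T = (b * sigma n i * tau n j) \<cdot>\<^sub>m O3"
proof -
  have "Dmat n * (b \<cdot>\<^sub>m O2) = (b * sigma n i) \<cdot>\<^sub>m O2" by (rule P_DV)
  moreover have "((b * sigma n i) \<cdot>\<^sub>m O2) * (Bmat n)\<^sup>T = (b * sigma n i) \<cdot>\<^sub>m (O2 * (Bmat n)\<^sup>T)"
    by (rule mult_smult_assoc_mat[OF O2c BTc])
  moreover have "O2 * (Bmat n)\<^sup>T = outer (svec n i) ((Bmat n)\<^sup>T\<^sup>T *\<^sub>v cvec n j)" by (rule outer_mult[where k="n - 1"]) (simp only: svec_dim cvec_dim Amat_carrier Dmat_carrier Bmat_carrier BTc)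
  moreover have "\<dots> = outer (svec n i) (tau n j \<cdot>\<^sub>v svec n j)" by (simp add: B_c[OF n])
  ultimately show ?thesis by (simp add: outer_smult_r smult_smult' mult.assoc)
qed

end

lemma sigma_pos: "sigma n i > 0"
proof -
  have "0 < 2 + cos (real i * pi / real n)" by (smt (verit) cos_ge_minus_one)
  then show ?thesis unfolding sigma_def by simp
qed

lemma tau_nz: "1 \<le> j \<Longrightarrow> j < n \<Longrightarrow> tau n j \<noteq> 0"
proof -
  assume j: "1 \<le> j" "j < n"
  have "0 < real j * pi / (2 * real n)" using j by simp
  moreover have "real j * pi / (2 * real n) < pi"
  proof -
    have "real j < 2 * real n" using j by simp
    then have "real j * pi < (2 * real n) * pi" by simp
    then show ?thesis using j by (simp add: divide_less_eq)
  qed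
  ultimately have "sin (real j * pi / (2 * real n)) > 0" by (rule sin_gt_zero)
  then show ?thesis unfolding tau_def by simp
qed

lemma s0_nz: "1 \<le> j \<Longrightarrow> j < n \<Longrightarrow> svec n j $ 0 \<noteq> 0"
proof -
  assume j: "1 \<le> j" "j < n"
  have "0 < real j * pi / real n" using j by simp
  moreover have "real j * pi / real n < pi"
  proof -
    have "real j < real n" using j by simp
    then have "real j * pi < real n * pi" by simp
    then show ?thesis using j by (simp add: divide_less_eq)
  qed
  ultimately have "sin (real j * pi / real n) > 0" by (rule sin_gt_zero)
  then show ?thesis using j by (simp add: svec_def)
qed

lemma c0_nz: "i < n \<Longrightarrow> cvec n i $ 0 \<noteq> 0"
proof -
  assume i: "i < n"
  have "0 \<le> real i * pi / (2 * real n)" by simp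
  then have "- (pi / 2) < real i * pi / (2 * real n)" using pi_gt_zero by linarith
  moreover have "real i * pi / (2 * real n) < pi / 2"
  proof -
    have "real i < real n" using i by simp
    then have "real i * pi < real n * pi" by simp
    then show ?thesis using i by (simp add: divide_less_eq)
  qed
  ultimately have "cos (real i * pi / (2 * real n)) > 0" by (rule cos_gt_zero_pi)
  moreover have "nu i > 0" by (simp add: nu_def)
  ultimately show ?thesis using i by (simp add: cvec_def)
qed

lemma div_sol:
  assumes n: "n \<ge> 2" and i: "i < n" and j: "j < n" and ij: "(i, j) \<noteq> (0, 0)"
  shows "is_eigsol n (lam_div n i j) (U_div n i j) (V_div n i j) \<and>
        Bmat n * U_div n i j * Dmat n + Dmat n * V_div n i j * (Bmat n)\<^sup>T = 0\<^sub>m (n - 1) (n - 1)"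
proof -
  define a where "a = tau n j * sigma n i"
  define b where "b = - tau n i * sigma n j"
  define mu where "mu = (1 / real n)^2 / 6 * lam_div n i j"
  have mu: "mu = (tau n i)^2 / sigma n i + (tau n j)^2 / sigma n j"
    using n by (simp add: mu_def lam_div_def mult.commute)
  have si: "sigma n i \<noteq> 0" and sj: "sigma n j \<noteq> 0" using sigma_pos by (simp_all add: less_imp_neq[symmetric])
  have U: "U_div n i j = a \<cdot>\<^sub>m O1 n i j" by (simp add: U_div_def a_def)
  have V: "V_div n i j = b \<cdot>\<^sub>m O2 n i j" by (simp add: V_div_def b_def)
  have Uc: "U_div n i j \<in> carrier_mat n (n - 1)" unfolding U using O1c[OF n] by simp
  have Vc: "V_div n i j \<in> carrier_mat (n - 1) n" unfolding V using O2c[OF n] by simp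
  have e1: "U_div n i j * Amat n - (Bmat n)\<^sup>T * V_div n i j * (Bmat n)\<^sup>T
        = (mu) \<cdot>\<^sub>m (U_div n i j * Dmat n)"
  proof -
    have "U_div n i j * Amat n - (Bmat n)\<^sup>T * V_div n i j * (Bmat n)\<^sup>T
        = (a * (tau n j)^2 - b * tau n i * tau n j) \<cdot>\<^sub>m O1 n i j"
      unfolding U V P_UA[OF n] P_BTVBT[OF n] smult_minus' ..
    also have "\<dots> = (mu * (a * sigma n j)) \<cdot>\<^sub>m O1 n i j"
      using si sj unfolding mu a_def b_def by (intro arg_cong[where f="\<lambda>x. x \<cdot>\<^sub>m O1 n i j"]) (simp add: field_simps power2_eq_square)
    also have "\<dots> = mu \<cdot>\<^sub>m (U_div n i j * Dmat n)"
      unfolding U P_UD[OF n] smult_smult' ..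
    finally show ?thesis .
  qed
  have e2: "- (Bmat n * U_div n i j * Bmat n) + Amat n * V_div n i j
        = (mu) \<cdot>\<^sub>m (Dmat n * V_div n i j)"
  proof -
    have "- (Bmat n * U_div n i j * Bmat n) + Amat n * V_div n i j
        = (b * (tau n i)^2 - a * tau n i * tau n j) \<cdot>\<^sub>m O2 n i j"
      unfolding U V P_AV[OF n] P_BUB[OF n] smult_uminus_plus' ..
    also have "\<dots> = (mu * (b * sigma n i)) \<cdot>\<^sub>m O2 n i j"
      using si sj unfolding mu a_def b_def by (intro arg_cong[where f="\<lambda>x. x \<cdot>\<^sub>m O2 n i j"]) (simp add: field_simps power2_eq_square)
    also have "\<dots> = mu \<cdot>\<^sub>m (Dmat n * V_div n i j)"
      unfolding V P_DV[OF n] smult_smult' ..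
    finally show ?thesis .
  qed
  have e3: "Bmat n * U_div n i j * Dmat n + Dmat n * V_div n i j * (Bmat n)\<^sup>T = 0\<^sub>m (n - 1) (n - 1)"
  proof -
    have "Bmat n * U_div n i j * Dmat n + Dmat n * V_div n i j * (Bmat n)\<^sup>T
        = (a * tau n i * sigma n j + b * sigma n i * tau n j) \<cdot>\<^sub>m O3 n i j"
      unfolding U V P_BUD[OF n] P_DVBT[OF n] smult_plus' ..
    also have "a * tau n i * sigma n j + b * sigma n i * tau n j = 0"
      unfolding a_def b_def by (simp add: algebra_simps)
    finally show ?thesis by (simp add: smult_zero')
  qed
  have nz: "(U_div n i j, V_div n i j) \<noteq> (0\<^sub>m n (n - 1), 0\<^sub>m (n - 1) n)"
  proof (cases "j = 0")
    case True
    then have i1: "1 \<le> i" using ij by simp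
    have "V_div n i j $$ (0, 0) = b * (svec n i $ 0 * cvec n j $ 0)" unfolding V using n by simp
    moreover have "b \<noteq> 0" unfolding b_def using tau_nz[OF i1 i] sj by simp
    moreover have "svec n i $ 0 \<noteq> 0" using s0_nz[OF i1 i] .
    moreover have "cvec n j $ 0 \<noteq> 0" using c0_nz[OF j] .
    ultimately have "V_div n i j $$ (0, 0) \<noteq> 0" by simp
    then have "V_div n i j \<noteq> 0\<^sub>m (n - 1) n" using n by auto
    then show ?thesis by simp
  next
    case False
    then have j1: "1 \<le> j" by simp
    have "U_div n i j $$ (0, 0) = a * (cvec n i $ 0 * svec n j $ 0)" unfolding U using n by simp
    moreover have "a \<noteq> 0" unfolding a_def using tau_nz[OF j1 j] si by simp
    moreover have "svec n j $ 0 \<noteq> 0" using s0_nz[OF j1 j] .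
    moreover have "cvec n i $ 0 \<noteq> 0" using c0_nz[OF i] .
    ultimately have "U_div n i j $$ (0, 0) \<noteq> 0" by simp
    then have "U_div n i j \<noteq> 0\<^sub>m n (n - 1)" using n by auto
    then show ?thesis by simp
  qed
  show ?thesis unfolding is_eigsol_def using Uc Vc nz e1 e2 e3 unfolding mu_def by blast
qed

lemma curl_sol:
  assumes n: "n \<ge> 2" and i: "1 \<le> i" "i < n" and j: "1 \<le> j" "j < n"
  shows "is_eigsol n 0 (U_curl n i j) (V_curl n i j)"
proof -
  define a where "a = tau n i"
  define b where "b = tau n j"
  have U: "U_curl n i j = a \<cdot>\<^sub>m O1 n i j" by (simp add: U_curl_def a_def)
  have V: "V_curl n i j = b \<cdot>\<^sub>m O2 n i j" by (simp add: V_curl_def b_def)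
  have Uc: "U_curl n i j \<in> carrier_mat n (n - 1)" unfolding U using O1c[OF n] by simp
  have Vc: "V_curl n i j \<in> carrier_mat (n - 1) n" unfolding V using O2c[OF n] by simp
  have e1: "U_curl n i j * Amat n - (Bmat n)\<^sup>T * V_curl n i j * (Bmat n)\<^sup>T
        = ((1 / real n)^2 / 6 * 0) \<cdot>\<^sub>m (U_curl n i j * Dmat n)"
  proof -
    have "U_curl n i j * Amat n - (Bmat n)\<^sup>T * V_curl n i j * (Bmat n)\<^sup>T
        = (a * (tau n j)^2 - b * tau n i * tau n j) \<cdot>\<^sub>m O1 n i j"
      unfolding U V P_UA[OF n] P_BTVBT[OF n] smult_minus' ..
    also have "\<dots> = (((1 / real n)^2 / 6 * 0) * (a * sigma n j)) \<cdot>\<^sub>m O1 n i j"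
      unfolding a_def b_def by (simp add: power2_eq_square)
    also have "\<dots> = ((1 / real n)^2 / 6 * 0) \<cdot>\<^sub>m (U_curl n i j * Dmat n)"
      unfolding U P_UD[OF n] smult_smult' ..
    finally show ?thesis .
  qed
  have e2: "- (Bmat n * U_curl n i j * Bmat n) + Amat n * V_curl n i j
        = ((1 / real n)^2 / 6 * 0) \<cdot>\<^sub>m (Dmat n * V_curl n i j)"
  proof -
    have "- (Bmat n * U_curl n i j * Bmat n) + Amat n * V_curl n i j
        = (b * (tau n i)^2 - a * tau n i * tau n j) \<cdot>\<^sub>m O2 n i j"
      unfolding U V P_AV[OF n] P_BUB[OF n] smult_uminus_plus' ..
    also have "\<dots> = (((1 / real n)^2 / 6 * 0) * (b * sigma n i)) \<cdot>\<^sub>m O2 n i j"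
      unfolding a_def b_def by (simp add: power2_eq_square)
    also have "\<dots> = ((1 / real n)^2 / 6 * 0) \<cdot>\<^sub>m (Dmat n * V_curl n i j)"
      unfolding V P_DV[OF n] smult_smult' ..
    finally show ?thesis .
  qed
  have nz: "(U_curl n i j, V_curl n i j) \<noteq> (0\<^sub>m n (n - 1), 0\<^sub>m (n - 1) n)"
  proof -
    have "U_curl n i j $$ (0, 0) = a * (cvec n i $ 0 * svec n j $ 0)" unfolding U using n by simp
    moreover have "a \<noteq> 0" unfolding a_def using tau_nz[OF i] .
    moreover have "svec n j $ 0 \<noteq> 0" using s0_nz[OF j] .
    moreover have "cvec n i $ 0 \<noteq> 0" using c0_nz i by simp
    ultimately have "U_curl n i j $$ (0, 0) \<noteq> 0" by simp
    then have "U_curl n i j \<noteq> 0\<^sub>m n (n - 1)" using n by auto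
    then show ?thesis by simp
  qed
  show ?thesis unfolding is_eigsol_def using Uc Vc nz e1 e2 by blast
qed

lemma tensor_indep:
  fixes u v :: "nat \<Rightarrow> nat \<Rightarrow> real" and x :: "nat \<times> nat \<Rightarrow> real"
  assumes fin: "finite I" "finite J" "finite R" "finite C"
    and ou: "\<And>i i'. i \<in> I \<Longrightarrow> i' \<in> I \<Longrightarrow> (\<Sum>r\<in>R. u i r * u i' r) = (if i = i' then ka else 0)"
    and ov: "\<And>j j'. j \<in> J \<Longrightarrow> j' \<in> J \<Longrightarrow> (\<Sum>c\<in>C. v j c * v j' c) = (if j = j' then kb else 0)"
    and k: "ka \<noteq> 0" "kb \<noteq> 0"
    and z: "\<And>r c. r \<in> R \<Longrightarrow> c \<in> C \<Longrightarrow> (\<Sum>p\<in>I \<times> J. x p * (u (fst p) r * v (snd p) c)) = 0"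
    and q: "q \<in> I \<times> J"
  shows "x q = 0"
proof -
  obtain i0 j0 where q': "q = (i0, j0)" "i0 \<in> I" "j0 \<in> J" using q by auto
  have "0 = (\<Sum>r\<in>R. \<Sum>c\<in>C. (\<Sum>p\<in>I \<times> J. x p * (u (fst p) r * v (snd p) c)) * (u i0 r * v j0 c))"
    using z by simp
  also have "\<dots> = (\<Sum>r\<in>R. \<Sum>c\<in>C. \<Sum>p\<in>I \<times> J. x p * ((u (fst p) r * u i0 r) * (v (snd p) c * v j0 c)))"
    by (intro sum.cong refl) (subst sum_distrib_right, rule sum.cong, rule refl, simp add: mult_ac)
  also have "\<dots> = (\<Sum>r\<in>R. \<Sum>p\<in>I \<times> J. \<Sum>c\<in>C. x p * ((u (fst p) r * u i0 r) * (v (snd p) c * v j0 c)))"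
    by (intro sum.cong refl) (rule sum.swap)
  also have "\<dots> = (\<Sum>p\<in>I \<times> J. \<Sum>r\<in>R. \<Sum>c\<in>C. x p * ((u (fst p) r * u i0 r) * (v (snd p) c * v j0 c)))"
    by (rule sum.swap)
  also have "\<dots> = (\<Sum>p\<in>I \<times> J. x p * ((\<Sum>r\<in>R. u (fst p) r * u i0 r) * (\<Sum>c\<in>C. v (snd p) c * v j0 c)))"
    by (intro sum.cong refl) (unfold sum_product, unfold sum_distrib_left, rule refl)
  also have "\<dots> = (\<Sum>p\<in>I \<times> J. if p = q then x q * ka * kb else 0)"
  proof (rule sum.cong[OF refl])
    fix p assume p: "p \<in> I \<times> J"
    then show "x p * ((\<Sum>r\<in>R. u (fst p) r * u i0 r) * (\<Sum>c\<in>C. v (snd p) c * v j0 c)) = (if p = q then x q * ka * kb else 0)"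
      using ou[of "fst p" i0] ov[of "snd p" j0] q' by (cases p) auto
  qed
  also have "\<dots> = x q * ka * kb" using q fin by (simp add: sum.delta)
  finally show ?thesis using k by simp
qed

lemma tensor_span:
  fixes u v :: "nat \<Rightarrow> nat \<Rightarrow> real" and X :: "nat \<Rightarrow> nat \<Rightarrow> real"
  assumes fin: "finite I" "finite J" "finite R" "finite C"
    and du: "\<And>r r'. r \<in> R \<Longrightarrow> r' \<in> R \<Longrightarrow> (\<Sum>i\<in>I. u i r * u i r') = (if r = r' then ka else 0)"
    and dv: "\<And>c c'. c \<in> C \<Longrightarrow> c' \<in> C \<Longrightarrow> (\<Sum>j\<in>J. v j c * v j c') = (if c = c' then kb else 0)"
    and k: "ka \<noteq> 0" "kb \<noteq> 0"
    and rc: "r \<in> R" "c \<in> C"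
  shows "(\<Sum>p\<in>I \<times> J. ((\<Sum>r'\<in>R. \<Sum>c'\<in>C. X r' c' * (u (fst p) r' * v (snd p) c')) / (ka * kb)) * (u (fst p) r * v (snd p) c)) = X r c"
proof -
  have "(\<Sum>p\<in>I \<times> J. ((\<Sum>r'\<in>R. \<Sum>c'\<in>C. X r' c' * (u (fst p) r' * v (snd p) c')) / (ka * kb)) * (u (fst p) r * v (snd p) c))
      = (\<Sum>p\<in>I \<times> J. \<Sum>r'\<in>R. \<Sum>c'\<in>C. X r' c' / (ka * kb) * ((u (fst p) r' * u (fst p) r) * (v (snd p) c' * v (snd p) c)))"
    by (intro sum.cong refl) (simp only: sum_divide_distrib sum_distrib_right, intro sum.cong refl, simp add: divide_inverse mult_ac)
  also have "\<dots> = (\<Sum>r'\<in>R. \<Sum>p\<in>I \<times> J. \<Sum>c'\<in>C. X r' c' / (ka * kb) * ((u (fst p) r' * u (fst p) r) * (v (snd p) c' * v (snd p) c)))"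
    by (rule sum.swap)
  also have "\<dots> = (\<Sum>r'\<in>R. \<Sum>c'\<in>C. \<Sum>p\<in>I \<times> J. X r' c' / (ka * kb) * ((u (fst p) r' * u (fst p) r) * (v (snd p) c' * v (snd p) c)))"
    by (intro sum.cong refl) (rule sum.swap)
  also have "\<dots> = (\<Sum>r'\<in>R. \<Sum>c'\<in>C. X r' c' / (ka * kb) * ((\<Sum>i\<in>I. u i r' * u i r) * (\<Sum>j\<in>J. v j c' * v j c)))"
  proof (intro sum.cong refl)
    fix r' c' assume "r' \<in> R" "c' \<in> C"
    have "(\<Sum>p\<in>I \<times> J. X r' c' / (ka * kb) * ((u (fst p) r' * u (fst p) r) * (v (snd p) c' * v (snd p) c)))
        = X r' c' / (ka * kb) * (\<Sum>p\<in>I \<times> J. (u (fst p) r' * u (fst p) r) * (v (snd p) c' * v (snd p) c))"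
      by (simp add: sum_distrib_left)
    also have "(\<Sum>p\<in>I \<times> J. (u (fst p) r' * u (fst p) r) * (v (snd p) c' * v (snd p) c))
        = (\<Sum>i\<in>I. \<Sum>j\<in>J. (u i r' * u i r) * (v j c' * v j c))"
      by (simp add: sum.cartesian_product split_def)
    also have "\<dots> = (\<Sum>i\<in>I. u i r' * u i r) * (\<Sum>j\<in>J. v j c' * v j c)"
      by (rule sum_product[symmetric])
    finally show "(\<Sum>p\<in>I \<times> J. X r' c' / (ka * kb) * ((u (fst p) r' * u (fst p) r) * (v (snd p) c' * v (snd p) c)))
        = X r' c' / (ka * kb) * ((\<Sum>i\<in>I. u i r' * u i r) * (\<Sum>j\<in>J. v j c' * v j c))" .
  qed
  also have "\<dots> = (\<Sum>r'\<in>R. \<Sum>c'\<in>C. if r' = r \<and> c' = c then X r c else 0)"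
  proof (intro sum.cong refl)
    fix r' c' assume "r' \<in> R" "c' \<in> C"
    then show "X r' c' / (ka * kb) * ((\<Sum>i\<in>I. u i r' * u i r) * (\<Sum>j\<in>J. v j c' * v j c)) = (if r' = r \<and> c' = c then X r c else 0)"
      using du[of r' r] dv[of c' c] rc k by auto
  qed
  also have "\<dots> = X r c"
  proof -
    have "(\<Sum>r'\<in>R. \<Sum>c'\<in>C. if r' = r \<and> c' = c then X r c else 0) = (\<Sum>r'\<in>R. if r' = r then X r c else 0)"
      by (intro sum.cong refl) (use fin rc in \<open>auto simp: sum.delta'\<close>)
    also have "\<dots> = X r c" using fin rc by (simp add: sum.delta')
    finally show ?thesis .
  qed
  finally show ?thesis .
qed

lemma oc: "n \<ge> 2 \<Longrightarrow> i \<in> {..<n} \<Longrightarrow> i' \<in> {..<n} \<Longrightarrow>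
   (\<Sum>r\<in>{..<n}. cvec n i $ r * cvec n i' $ r) = (if i = i' then real n / 2 else 0)"
  using ortho_c[of n i i'] by (simp add: cvec_idx)

lemma oc': "n \<ge> 2 \<Longrightarrow> r \<in> {..<n} \<Longrightarrow> r' \<in> {..<n} \<Longrightarrow>
   (\<Sum>i\<in>{..<n}. cvec n i $ r * cvec n i $ r') = (if r = r' then real n / 2 else 0)"
  using ortho_c'[of n r r'] by (simp add: cvec_idx)

lemma os: "n \<ge> 2 \<Longrightarrow> j \<in> {1..n-1} \<Longrightarrow> j' \<in> {1..n-1} \<Longrightarrow>
   (\<Sum>c\<in>{..<n-1}. svec n j $ c * svec n j' $ c) = (if j = j' then real n / 2 else 0)"
  using ortho_s[of n j j'] by (simp add: svec_def)

lemma os': assumes n: "n \<ge> 2" and c: "c \<in> {..<n-1}" and c': "c' \<in> {..<n-1}"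
  shows "(\<Sum>j\<in>{1..n-1}. svec n j $ c * svec n j $ c') = (if c = c' then real n / 2 else 0)"
proof -
  have "(\<Sum>j\<in>{1..n-1}. svec n j $ c * svec n j $ c') = (\<Sum>k<n-1. svec n (Suc k) $ c * svec n (Suc k) $ c')"
    by (simp add: sum.atLeast1_atMost_eq)
  also have "\<dots> = (\<Sum>k<n-1. sin (real (k + 1) * real (c + 1) * pi / real n) * sin (real (k + 1) * real (c' + 1) * pi / real n))"
  proof (rule sum.cong[OF refl])
    fix k assume "k \<in> {..<n-1}"
    then show "svec n (Suc k) $ c * svec n (Suc k) $ c' = sin (real (k + 1) * real (c + 1) * pi / real n) * sin (real (k + 1) * real (c' + 1) * pi / real n)"
      using c c' by (simp add: svec_def mult_ac)
  qed
  also have "\<dots> = (if c + 1 = c' + 1 then real n / 2 else 0)"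
    by (rule ortho_s) (use n c c' in auto)
  finally show ?thesis by simp
qed

definition Gs :: "nat \<Rightarrow> (nat \<times> nat) set" where "Gs n = {..<n} \<times> {1..n-1}"
definition Gs' :: "nat \<Rightarrow> (nat \<times> nat) set" where "Gs' n = {1..n-1} \<times> {..<n}"

definition PP :: "nat \<Rightarrow> (nat \<times> nat \<Rightarrow> real) \<Rightarrow> (nat \<times> nat \<Rightarrow> real) \<Rightarrow> nat \<times> nat \<Rightarrow> real" where
  "PP n a b p = a p * (tau n (snd p) * sigma n (fst p)) + (if 1 \<le> fst p then b p * tau n (fst p) else 0)"
definition QQ :: "nat \<Rightarrow> (nat \<times> nat \<Rightarrow> real) \<Rightarrow> (nat \<times> nat \<Rightarrow> real) \<Rightarrow> nat \<times> nat \<Rightarrow> real" where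
  "QQ n a b p = a p * (- tau n (fst p) * sigma n (snd p)) + (if 1 \<le> snd p then b p * tau n (snd p) else 0)"

lemma tau0: "tau n 0 = 0" by (simp add: tau_def)

lemma I_div_eq: "n \<ge> 1 \<Longrightarrow> I_div n = ({..<n} \<times> {..<n}) - {(0, 0)}"
  by (auto simp: I_div_def)
lemma I_curl_eq: "I_curl n = {1..n-1} \<times> {1..n-1}"
  by (auto simp: I_curl_def)

lemma card_I_div: "n \<ge> 1 \<Longrightarrow> card (I_div n) = n\<^sup>2 - 1"
  by (simp add: I_div_eq card_Diff_singleton power2_eq_square)
lemma card_I_curl: "card (I_curl n) = (n - 1)\<^sup>2"
  by (simp add: I_curl_eq power2_eq_square)

lemma combU_repr:
  assumes n: "n \<ge> 2" and r: "r < n" and c: "c < n - 1"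
  shows "combU n a b $$ (r, c) = (\<Sum>p\<in>Gs n. PP n a b p * (cvec n (fst p) $ r * svec n (snd p) $ c))"
proof -
  have Ud: "U_div n i j $$ (r, c) = tau n j * sigma n i * (cvec n i $ r * svec n j $ c)" for i j
    using r c by (simp add: U_div_def)
  have Uc: "U_curl n i j $$ (r, c) = tau n i * (cvec n i $ r * svec n j $ c)" for i j
    using r c by (simp add: U_curl_def)
  have fin: "finite (I_div n)" "finite (Gs n)" using n by (simp_all add: I_div_eq Gs_def)
  have s1: "(\<Sum>p\<in>I_div n. a p * U_div n (fst p) (snd p) $$ (r, c))
      = (\<Sum>p\<in>Gs n. a p * (tau n (snd p) * sigma n (fst p)) * (cvec n (fst p) $ r * svec n (snd p) $ c))"
  proof (rule sum.mono_neutral_cong_right[OF fin(1)])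
    show "Gs n \<subseteq> I_div n" using n by (auto simp: Gs_def I_div_def)
    show "\<forall>p\<in>I_div n - Gs n. a p * U_div n (fst p) (snd p) $$ (r, c) = 0"
    proof
      fix p assume "p \<in> I_div n - Gs n"
      then have "snd p = 0" by (cases p) (auto simp: Gs_def I_div_def)
      then show "a p * U_div n (fst p) (snd p) $$ (r, c) = 0" by (simp add: Ud tau0)
    qed
    show "a p * U_div n (fst p) (snd p) $$ (r, c) = a p * (tau n (snd p) * sigma n (fst p)) * (cvec n (fst p) $ r * svec n (snd p) $ c)" for p
      by (simp add: Ud)
  qed
  have s2: "(\<Sum>p\<in>I_curl n. b p * U_curl n (fst p) (snd p) $$ (r, c))
      = (\<Sum>p\<in>Gs n. (if 1 \<le> fst p then b p * tau n (fst p) else 0) * (cvec n (fst p) $ r * svec n (snd p) $ c))"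
  proof (rule sum.mono_neutral_cong_left[OF fin(2)])
    show "I_curl n \<subseteq> Gs n" by (auto simp: Gs_def I_curl_def)
    show "\<forall>p\<in>Gs n - I_curl n. (if 1 \<le> fst p then b p * tau n (fst p) else 0) * (cvec n (fst p) $ r * svec n (snd p) $ c) = 0"
      by (auto simp: Gs_def I_curl_def)
    show "b p * U_curl n (fst p) (snd p) $$ (r, c) = (if 1 \<le> fst p then b p * tau n (fst p) else 0) * (cvec n (fst p) $ r * svec n (snd p) $ c)"
      if "p \<in> I_curl n" for p
      using that by (auto simp: I_curl_def Uc)
  qed
  have "combU n a b $$ (r, c) = (\<Sum>p\<in>I_div n. a p * U_div n (fst p) (snd p) $$ (r, c))
      + (\<Sum>p\<in>I_curl n. b p * U_curl n (fst p) (snd p) $$ (r, c))"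
    using r c by (simp add: combU_def)
  also have "\<dots> = (\<Sum>p\<in>Gs n. PP n a b p * (cvec n (fst p) $ r * svec n (snd p) $ c))"
    unfolding s1 s2 sum.distrib[symmetric] PP_def distrib_right ..
  finally show ?thesis .
qed

lemma combV_repr:
  assumes n: "n \<ge> 2" and r: "r < n - 1" and c: "c < n"
  shows "combV n a b $$ (r, c) = (\<Sum>p\<in>Gs' n. QQ n a b p * (svec n (fst p) $ r * cvec n (snd p) $ c))"
proof -
  have Vd: "V_div n i j $$ (r, c) = - tau n i * sigma n j * (svec n i $ r * cvec n j $ c)" for i j
    using r c by (simp add: V_div_def)
  have Vc: "V_curl n i j $$ (r, c) = tau n j * (svec n i $ r * cvec n j $ c)" for i j
    using r c by (simp add: V_curl_def)
  have fin: "finite (I_div n)" "finite (Gs' n)" using n by (simp_all add: I_div_eq Gs'_def)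
  have s1: "(\<Sum>p\<in>I_div n. a p * V_div n (fst p) (snd p) $$ (r, c))
      = (\<Sum>p\<in>Gs' n. a p * (- tau n (fst p) * sigma n (snd p)) * (svec n (fst p) $ r * cvec n (snd p) $ c))"
  proof (rule sum.mono_neutral_cong_right[OF fin(1)])
    show "Gs' n \<subseteq> I_div n" using n by (auto simp: Gs'_def I_div_def)
    show "\<forall>p\<in>I_div n - Gs' n. a p * V_div n (fst p) (snd p) $$ (r, c) = 0"
    proof
      fix p assume "p \<in> I_div n - Gs' n"
      then have "fst p = 0" by (cases p) (auto simp: Gs'_def I_div_def)
      then show "a p * V_div n (fst p) (snd p) $$ (r, c) = 0" by (simp add: Vd tau0)
    qed
    show "a p * V_div n (fst p) (snd p) $$ (r, c) = a p * (- tau n (fst p) * sigma n (snd p)) * (svec n (fst p) $ r * cvec n (snd p) $ c)" for p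
      by (simp add: Vd)
  qed
  have s2: "(\<Sum>p\<in>I_curl n. b p * V_curl n (fst p) (snd p) $$ (r, c))
      = (\<Sum>p\<in>Gs' n. (if 1 \<le> snd p then b p * tau n (snd p) else 0) * (svec n (fst p) $ r * cvec n (snd p) $ c))"
  proof (rule sum.mono_neutral_cong_left[OF fin(2)])
    show "I_curl n \<subseteq> Gs' n" by (auto simp: Gs'_def I_curl_def)
    show "\<forall>p\<in>Gs' n - I_curl n. (if 1 \<le> snd p then b p * tau n (snd p) else 0) * (svec n (fst p) $ r * cvec n (snd p) $ c) = 0"
      by (auto simp: Gs'_def I_curl_def)
    show "b p * V_curl n (fst p) (snd p) $$ (r, c) = (if 1 \<le> snd p then b p * tau n (snd p) else 0) * (svec n (fst p) $ r * cvec n (snd p) $ c)"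
      if "p \<in> I_curl n" for p
      using that by (auto simp: I_curl_def Vc)
  qed
  have "combV n a b $$ (r, c) = (\<Sum>p\<in>I_div n. a p * V_div n (fst p) (snd p) $$ (r, c))
      + (\<Sum>p\<in>I_curl n. b p * V_curl n (fst p) (snd p) $$ (r, c))"
    using r c by (simp add: combV_def)
  also have "\<dots> = (\<Sum>p\<in>Gs' n. QQ n a b p * (svec n (fst p) $ r * cvec n (snd p) $ c))"
    unfolding s1 s2 sum.distrib[symmetric] QQ_def distrib_right ..
  finally show ?thesis .
qed

lemma sys2_zero:
  fixes x y ti tj si sj :: real
  assumes e1: "x * (tj * si) + y * ti = 0" and e2: "x * (- ti * sj) + y * tj = 0"
    and t: "ti \<noteq> 0" "tj \<noteq> 0" and s: "si > 0" "sj > 0"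
  shows "x = 0 \<and> y = 0"
proof -
  have "x * (tj * tj * si + ti * ti * sj) = tj * (x * (tj * si) + y * ti) - ti * (x * (- ti * sj) + y * tj)"
    by (simp add: algebra_simps)
  also have "\<dots> = 0" using e1 e2 by simp
  finally have h: "x * (tj * tj * si + ti * ti * sj) = 0" .
  have "tj * tj > 0" using t(2) not_real_square_gt_zero by blast
  then have "tj * tj * si > 0" using s by (simp add: mult_pos_pos)
  moreover have "ti * ti * sj \<ge> 0" using s by simp
  ultimately have "tj * tj * si + ti * ti * sj \<noteq> 0" by linarith
  then have x: "x = 0" using h by simp
  then have "y * ti = 0" using e1 by simp
  then show ?thesis using x t by simp
qed

lemma sys2_solve:
  fixes x y ti tj si sj :: real
  assumes t: "ti \<noteq> 0" "tj \<noteq> 0" and s: "si > 0" "sj > 0"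
  defines "D \<equiv> tj * tj * si + ti * ti * sj"
  shows "(x * tj - y * ti) / D * (tj * si) + (x * ti * sj + y * tj * si) / D * ti = x"
    and "(x * tj - y * ti) / D * (- ti * sj) + (x * ti * sj + y * tj * si) / D * tj = y"
proof -
  have "tj * tj > 0" using t(2) not_real_square_gt_zero by blast
  then have "tj * tj * si > 0" using s by (simp add: mult_pos_pos)
  moreover have "ti * ti * sj \<ge> 0" using s by simp
  ultimately have D: "D \<noteq> 0" unfolding D_def by linarith
  show "(x * tj - y * ti) / D * (tj * si) + (x * ti * sj + y * tj * si) / D * ti = x"
    using D by (simp add: field_simps) (simp add: D_def algebra_simps)
  show "(x * tj - y * ti) / D * (- ti * sj) + (x * ti * sj + y * tj * si) / D * tj = y"
    using D by (simp add: field_simps) (simp add: D_def algebra_simps)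
qed

lemma indep:
  assumes n: "n \<ge> 2" and U0: "combU n a b = 0\<^sub>m n (n - 1)" and V0: "combV n a b = 0\<^sub>m (n - 1) n"
  shows "(\<forall>p\<in>I_div n. a p = 0) \<and> (\<forall>p\<in>I_curl n. b p = 0)"
proof -
  have k: "real n / 2 \<noteq> 0" using n by simp
  have PZ: "PP n a b q = 0" if q: "q \<in> Gs n" for q
  proof (rule tensor_indep[where I="{..<n}" and J="{1..n-1}" and R="{..<n}" and C="{..<n-1}"
        and u="\<lambda>i r. cvec n i $ r" and v="\<lambda>j c. svec n j $ c" and ka="real n / 2" and kb="real n / 2"])
    show "(\<Sum>r\<in>{..<n}. cvec n i $ r * cvec n i' $ r) = (if i = i' then real n / 2 else 0)"
      if "i \<in> {..<n}" "i' \<in> {..<n}" for i i' using oc[OF n that] .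
    show "(\<Sum>c\<in>{..<n-1}. svec n j $ c * svec n j' $ c) = (if j = j' then real n / 2 else 0)"
      if "j \<in> {1..n-1}" "j' \<in> {1..n-1}" for j j' using os[OF n that] .
    show "(\<Sum>p\<in>{..<n} \<times> {1..n-1}. PP n a b p * (cvec n (fst p) $ r * svec n (snd p) $ c)) = 0"
      if "r \<in> {..<n}" "c \<in> {..<n-1}" for r c
    proof -
      have "combU n a b $$ (r, c) = 0" using U0 that by simp
      then show ?thesis using combU_repr[OF n, of r c a b] that by (simp add: Gs_def)
    qed
    show "q \<in> {..<n} \<times> {1..n-1}" using q by (simp add: Gs_def)
  qed (use k in auto)
  have QZ: "QQ n a b q = 0" if q: "q \<in> Gs' n" for q
  proof (rule tensor_indep[where I="{1..n-1}" and J="{..<n}" and R="{..<n-1}" and C="{..<n}"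
        and u="\<lambda>i r. svec n i $ r" and v="\<lambda>j c. cvec n j $ c" and ka="real n / 2" and kb="real n / 2"])
    show "(\<Sum>r\<in>{..<n}. cvec n i $ r * cvec n i' $ r) = (if i = i' then real n / 2 else 0)"
      if "i \<in> {..<n}" "i' \<in> {..<n}" for i i' using oc[OF n that] .
    show "(\<Sum>c\<in>{..<n-1}. svec n j $ c * svec n j' $ c) = (if j = j' then real n / 2 else 0)"
      if "j \<in> {1..n-1}" "j' \<in> {1..n-1}" for j j' using os[OF n that] .
    show "(\<Sum>p\<in>{1..n-1} \<times> {..<n}. QQ n a b p * (svec n (fst p) $ r * cvec n (snd p) $ c)) = 0"
      if "r \<in> {..<n-1}" "c \<in> {..<n}" for r c
    proof -
      have "combV n a b $$ (r, c) = 0" using V0 that by simp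
      then show ?thesis using combV_repr[OF n, of r c a b] that by (simp add: Gs'_def)
    qed
    show "q \<in> {1..n-1} \<times> {..<n}" using q by (simp add: Gs'_def)
  qed (use k in auto)
  have both: "a (i, j) = 0 \<and> b (i, j) = 0" if ij: "1 \<le> i" "i < n" "1 \<le> j" "j < n" for i j
  proof (rule sys2_zero)
    show "a (i, j) * (tau n j * sigma n i) + b (i, j) * tau n i = 0"
      using PZ[of "(i, j)"] ij by (simp add: Gs_def PP_def)
    show "a (i, j) * (- tau n i * sigma n j) + b (i, j) * tau n j = 0"
      using QZ[of "(i, j)"] ij by (simp add: Gs'_def QQ_def)
  qed (use ij tau_nz sigma_pos in auto)
  have A: "a p = 0" if p: "p \<in> I_div n" for p
  proof -
    obtain i j where p': "p = (i, j)" "i < n" "j < n" "(i, j) \<noteq> (0, 0)" using p n by (cases p) (auto simp: I_div_def)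
    show ?thesis
    proof (cases "i = 0")
      case True
      then have j: "1 \<le> j" using p' by simp
      have "a (i, j) * (tau n j * sigma n i) = 0"
        using PZ[of "(i, j)"] p' j True by (simp add: Gs_def PP_def)
      moreover have "tau n j \<noteq> 0" using tau_nz j p' by auto
      moreover have "sigma n i \<noteq> 0" using sigma_pos[of n i] by simp
      ultimately show ?thesis using p' by simp
    next
      case False
      then have i: "1 \<le> i" by simp
      show ?thesis
      proof (cases "j = 0")
        case True
        have "a (i, j) * (- tau n i * sigma n j) = 0"
          using QZ[of "(i, j)"] p' i True by (simp add: Gs'_def QQ_def)
        moreover have "tau n i \<noteq> 0" using tau_nz i p' by auto
        moreover have "sigma n j \<noteq> 0" using sigma_pos[of n j] by simp
        ultimately show ?thesis using p' by simp
      next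
        case False
        then show ?thesis using both[of i j] i p' by simp
      qed
    qed
  qed
  have B: "b p = 0" if p: "p \<in> I_curl n" for p
    using p both by (cases p) (auto simp: I_curl_def)
  show ?thesis using A B by blast
qed

lemma span:
  assumes n: "n \<ge> 2" and X: "X \<in> carrier_mat n (n - 1)" and Y: "Y \<in> carrier_mat (n - 1) n"
  shows "\<exists>a b. X = combU n a b \<and> Y = combV n a b"
proof -
  define xc where "xc p = (\<Sum>r'\<in>{..<n}. \<Sum>c'\<in>{..<n-1}. X $$ (r', c') * (cvec n (fst p) $ r' * svec n (snd p) $ c')) / (real n / 2 * (real n / 2))" for p
  define yc where "yc p = (\<Sum>r'\<in>{..<n-1}. \<Sum>c'\<in>{..<n}. Y $$ (r', c') * (svec n (fst p) $ r' * cvec n (snd p) $ c')) / (real n / 2 * (real n / 2))" for p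
  define D where "D i j = tau n j * tau n j * sigma n i + tau n i * tau n i * sigma n j" for i j
  define a where "a p = (if fst p = 0 then xc p / (tau n (snd p) * sigma n (fst p))
      else if snd p = 0 then yc p / (- tau n (fst p) * sigma n (snd p))
      else (xc p * tau n (snd p) - yc p * tau n (fst p)) / D (fst p) (snd p))" for p
  define b where "b p = (xc p * tau n (fst p) * sigma n (snd p) + yc p * tau n (snd p) * sigma n (fst p)) / D (fst p) (snd p)" for p
  have k: "real n / 2 \<noteq> 0" using n by simp
  have P: "PP n a b p = xc p" if p: "p \<in> Gs n" for p
  proof -
    obtain i j where p': "p = (i, j)" "i < n" "1 \<le> j" "j < n" using p n by (cases p) (auto simp: Gs_def)
    have tj: "tau n j \<noteq> 0" using tau_nz p' by auto
    have si: "sigma n i > 0" "sigma n j > 0" using sigma_pos by auto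
    show ?thesis
    proof (cases "i = 0")
      case True
      then show ?thesis using p' tj si by (simp add: PP_def a_def)
    next
      case False
      then have ti: "tau n i \<noteq> 0" using tau_nz p' by auto
      show ?thesis using False p' sys2_solve(1)[OF ti tj si, of "xc p" "yc p"]
        by (simp add: PP_def a_def b_def D_def)
    qed
  qed
  have Q: "QQ n a b p = yc p" if p: "p \<in> Gs' n" for p
  proof -
    obtain i j where p': "p = (i, j)" "1 \<le> i" "i < n" "j < n" using p n by (cases p) (auto simp: Gs'_def)
    have ti: "tau n i \<noteq> 0" using tau_nz p' by auto
    have si: "sigma n i > 0" "sigma n j > 0" using sigma_pos by auto
    show ?thesis
    proof (cases "j = 0")
      case True
      then show ?thesis using p' ti si by (simp add: QQ_def a_def)
    next
      case False
      then have tj: "tau n j \<noteq> 0" using tau_nz p' by auto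
      show ?thesis using False p' sys2_solve(2)[OF ti tj si, of "xc p" "yc p"]
        by (simp add: QQ_def a_def b_def D_def)
    qed
  qed
  have EU: "X = combU n a b"
  proof (rule eq_matI)
    show "dim_row X = dim_row (combU n a b)" "dim_col X = dim_col (combU n a b)" using X by (auto simp: combU_def)
    fix r c assume "r < dim_row (combU n a b)" "c < dim_col (combU n a b)"
    then have r: "r < n" and c: "c < n - 1" by (auto simp: combU_def)
    have "combU n a b $$ (r, c) = (\<Sum>p\<in>Gs n. xc p * (cvec n (fst p) $ r * svec n (snd p) $ c))"
      unfolding combU_repr[OF n r c] by (intro sum.cong refl) (simp add: P)
    also have "\<dots> = X $$ (r, c)"
      unfolding xc_def Gs_def
    proof (rule tensor_span[where u="\<lambda>i r. cvec n i $ r" and v="\<lambda>j c. svec n j $ c" and X="\<lambda>r c. X $$ (r, c)"])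
      show "(\<Sum>i\<in>{..<n}. cvec n i $ r * cvec n i $ r') = (if r = r' then real n / 2 else 0)"
        if "r \<in> {..<n}" "r' \<in> {..<n}" for r r' using oc'[OF n that] .
      show "(\<Sum>j\<in>{1..n-1}. svec n j $ c * svec n j $ c') = (if c = c' then real n / 2 else 0)"
        if "c \<in> {..<n-1}" "c' \<in> {..<n-1}" for c c' using os'[OF n that] .
    qed (use k r c in auto)
    finally show "X $$ (r, c) = combU n a b $$ (r, c)" by simp
  qed
  have EV: "Y = combV n a b"
  proof (rule eq_matI)
    show "dim_row Y = dim_row (combV n a b)" "dim_col Y = dim_col (combV n a b)" using Y by (auto simp: combV_def)
    fix r c assume "r < dim_row (combV n a b)" "c < dim_col (combV n a b)"
    then have r: "r < n - 1" and c: "c < n" by (auto simp: combV_def)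
    have "combV n a b $$ (r, c) = (\<Sum>p\<in>Gs' n. yc p * (svec n (fst p) $ r * cvec n (snd p) $ c))"
      unfolding combV_repr[OF n r c] by (intro sum.cong refl) (simp add: Q)
    also have "\<dots> = Y $$ (r, c)"
      unfolding yc_def Gs'_def
    proof (rule tensor_span[where u="\<lambda>i r. svec n i $ r" and v="\<lambda>j c. cvec n j $ c" and X="\<lambda>r c. Y $$ (r, c)"])
      show "(\<Sum>i\<in>{..<n}. cvec n i $ r * cvec n i $ r') = (if r = r' then real n / 2 else 0)"
        if "r \<in> {..<n}" "r' \<in> {..<n}" for r r' using oc'[OF n that] .
      show "(\<Sum>j\<in>{1..n-1}. svec n j $ c * svec n j $ c') = (if c = c' then real n / 2 else 0)"
        if "c \<in> {..<n-1}" "c' \<in> {..<n-1}" for c c' using os'[OF n that] .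
    qed (use k r c in auto)
    finally show "Y $$ (r, c) = combV n a b $$ (r, c)" by simp
  qed
  show ?thesis using EU EV by blast
qed

theorem theorem3p1:
  fixes n :: nat
  assumes "n \<ge> 2"
  shows
    "(\<forall>(i, j)\<in>I_div n.
        is_eigsol n (lam_div n i j) (U_div n i j) (V_div n i j) \<and>
        Bmat n * U_div n i j * Dmat n + Dmat n * V_div n i j * (Bmat n)\<^sup>T
          = 0\<^sub>m (n - 1) (n - 1))
   \<and> (\<forall>(i, j)\<in>I_curl n. is_eigsol n 0 (U_curl n i j) (V_curl n i j))
   \<and> card (I_div n) = n\<^sup>2 - 1
   \<and> card (I_curl n) = (n - 1)\<^sup>2
   \<and> (\<forall>a b. combU n a b = 0\<^sub>m n (n - 1) \<and> combV n a b = 0\<^sub>m (n - 1) n \<longrightarrow>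
          (\<forall>p\<in>I_div n. a p = 0) \<and> (\<forall>p\<in>I_curl n. b p = 0))
   \<and> (\<forall>X \<in> carrier_mat n (n - 1). \<forall>Y \<in> carrier_mat (n - 1) n.
          \<exists>a b. X = combU n a b \<and> Y = combV n a b)"
  proof -
  have n1: "n \<ge> 1" using assms by simp
  have P1: "\<forall>(i, j)\<in>I_div n.
        is_eigsol n (lam_div n i j) (U_div n i j) (V_div n i j) \<and>
        Bmat n * U_div n i j * Dmat n + Dmat n * V_div n i j * (Bmat n)\<^sup>T
          = 0\<^sub>m (n - 1) (n - 1)"
  proof (intro ballI, clarify)
    fix i j assume "(i, j) \<in> I_div n"
    then have "i < n" "j < n" "(i, j) \<noteq> (0, 0)" using assms by (auto simp: I_div_def)
    then show "is_eigsol n (lam_div n i j) (U_div n i j) (V_div n i j) \<and>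
        Bmat n * U_div n i j * Dmat n + Dmat n * V_div n i j * (Bmat n)\<^sup>T
          = 0\<^sub>m (n - 1) (n - 1)" using div_sol[OF assms] by blast
  qed
  have P2: "\<forall>(i, j)\<in>I_curl n. is_eigsol n 0 (U_curl n i j) (V_curl n i j)"
  proof (intro ballI, clarify)
    fix i j assume "(i, j) \<in> I_curl n"
    then have "1 \<le> i" "i < n" "1 \<le> j" "j < n" using assms by (auto simp: I_curl_def)
    then show "is_eigsol n 0 (U_curl n i j) (V_curl n i j)" using curl_sol[OF assms] by blast
  qed
  show ?thesis
    using P1 P2 card_I_div[OF n1] card_I_curl[of n] indep[OF assms] span[OF assms] by blast
qed

end
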